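(* Let $M$ be a quasi-minimal Lorentz surface in $\mathbb{E}^4_2$. Then $M$ has harmonic Gauss map (i.e. $\Delta G=0$) if and only if $M$ is flat and has parallel mean curvature vector field.
   Context: $\mathbb{E}^4_2$ is $\mathbb{R}^4$ with the metric $\langle\cdot,\cdot\rangle = dx_1^2+dx_2^2-dx_3^2-dx_4^2$. A Lorentz surface in $\mathbb{E}^4_2$ is an immersed surface with Lorentzian induced metric. $D$ denotes the normal connection, $H=\frac12\operatorname{tr}h$ the mean curvature vector field; the surface is quasi-minimal if $H\ne0$ and $\langle H,H\rangle=0$ everywhere; $H$ is parallel if $DH=0$; the surface is flat if its Gauss curvature vanishes identically. The space $\wedge^2\mathbb{E}^4_2$ is identified with a $6$-dimensional pseudo-Euclidean space via $\langle a\wedge b,c\wedge d\rangle=\langle a,c\rangle\langle b,d\rangle-\langle a,d\rangle\langle b,c\rangle$. The Gauss map is $G=x\wedge y:M\to\wedge^2\mathbb{E}^4_2$, where $\{x,y\}$ is a local tangent frame with $\langle x,x\rangle=\langle y,y\rangle=0$, $\langle x,y\rangle=-1$. The Laplacian acts componentwise on vector-valued functions by $\Delta\varphi = x(y(\varphi))+y(x(\varphi))-(\nabla_xy)(\varphi)-(\nabla_yx)(\varphi)$, where $\nabla$ is the Levi-Civita connection of $M$ (equivalently $\Delta\varphi=-\sum_i\varepsilon_i(e_ie_i\varphi-(\nabla_{e_i}e_i)\varphi)$ for an orthonormal frame $e_1,e_2$ with $\varepsilon_i=\langle e_i,e_i\rangle$). *)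

theory Defs
  imports "HOL-Analysis.Analysis"
begin

text \<open>Local-coordinate model of a surface in the pseudo-Euclidean space E^4_2.
  A surface patch is a map f : U \<subseteq> R^2 \<Rightarrow> R^4 (U open); coordinates are indexed by 0,1.\<close>

definition eps4 :: "4 \<Rightarrow> real" where
  "eps4 i = (if i = 1 \<or> i = 2 then 1 else -1)"

text \<open>The metric dx1^2+dx2^2-dx3^2-dx4^2 (components 1,2 positive, 3,4 negative; note 4 = 0 in type 4).\<close>
definition ip :: "real^4 \<Rightarrow> real^4 \<Rightarrow> real" where
  "ip a b = (\<Sum>i\<in>UNIV. eps4 i * (a $ i) * (b $ i))"

definition pd :: "nat \<Rightarrow> (real \<times> real \<Rightarrow> 'a::real_normed_vector) \<Rightarrow> real \<times> real \<Rightarrow> 'a" where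
  "pd i \<phi> p = frechet_derivative \<phi> (at p) (if i = 0 then (1, 0) else (0, 1))"

fun Ck_on :: "nat \<Rightarrow> (real \<times> real) set \<Rightarrow> (real \<times> real \<Rightarrow> 'a::real_normed_vector) \<Rightarrow> bool" where
  "Ck_on 0 U \<phi> = continuous_on U \<phi>"
| "Ck_on (Suc k) U \<phi> = (\<phi> differentiable_on U \<and> Ck_on k U (pd 0 \<phi>) \<and> Ck_on k U (pd 1 \<phi>))"

definition smooth_on :: "(real \<times> real) set \<Rightarrow> (real \<times> real \<Rightarrow> 'a::real_normed_vector) \<Rightarrow> bool" where
  "smooth_on U \<phi> = (\<forall>k. Ck_on k U \<phi>)"

definition gm :: "(real \<times> real \<Rightarrow> real^4) \<Rightarrow> nat \<Rightarrow> nat \<Rightarrow> real \<times> real \<Rightarrow> real" where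
  "gm f i j p = ip (pd i f p) (pd j f p)"

definition detg :: "(real \<times> real \<Rightarrow> real^4) \<Rightarrow> real \<times> real \<Rightarrow> real" where
  "detg f p = gm f 0 0 p * gm f 1 1 p - gm f 0 1 p * gm f 1 0 p"

definition ginv :: "(real \<times> real \<Rightarrow> real^4) \<Rightarrow> nat \<Rightarrow> nat \<Rightarrow> real \<times> real \<Rightarrow> real" where
  "ginv f i j p =
     (if i = 0 \<and> j = 0 then gm f 1 1 p
      else if i = 1 \<and> j = 1 then gm f 0 0 p
      else - gm f 0 1 p) / detg f p"

definition chr :: "(real \<times> real \<Rightarrow> real^4) \<Rightarrow> nat \<Rightarrow> nat \<Rightarrow> nat \<Rightarrow> real \<times> real \<Rightarrow> real" where
  "chr f k i j p = (1/2) * (\<Sum>l<2. ginv f k l p *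
      (pd i (gm f j l) p + pd j (gm f i l) p - pd l (gm f i j) p))"

text \<open>Riemann tensor R^l_{ijk} (R(d_j,d_k)d_i = R^l_{ijk} d_l) and Gauss curvature.\<close>
definition riem :: "(real \<times> real \<Rightarrow> real^4) \<Rightarrow> nat \<Rightarrow> nat \<Rightarrow> nat \<Rightarrow> nat \<Rightarrow> real \<times> real \<Rightarrow> real" where
  "riem f l i j k p = pd j (chr f l k i) p - pd k (chr f l j i) p
      + (\<Sum>m<2. chr f l j m p * chr f m k i p - chr f l k m p * chr f m j i p)"

definition gauss_curv :: "(real \<times> real \<Rightarrow> real^4) \<Rightarrow> real \<times> real \<Rightarrow> real" where
  "gauss_curv f p = (\<Sum>l<2. gm f 0 l p * riem f l 1 0 1 p) / detg f p"

definition flat :: "(real \<times> real) set \<Rightarrow> (real \<times> real \<Rightarrow> real^4) \<Rightarrow> bool" where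
  "flat U f = (\<forall>p\<in>U. gauss_curv f p = 0)"

definition nproj :: "(real \<times> real \<Rightarrow> real^4) \<Rightarrow> real \<times> real \<Rightarrow> real^4 \<Rightarrow> real^4" where
  "nproj f p v = v - (\<Sum>k<2. \<Sum>l<2. (ginv f k l p * ip v (pd k f p)) *\<^sub>R pd l f p)"

definition sff :: "(real \<times> real \<Rightarrow> real^4) \<Rightarrow> nat \<Rightarrow> nat \<Rightarrow> real \<times> real \<Rightarrow> real^4" where
  "sff f i j p = nproj f p (pd i (pd j f) p)"

definition mean_curv :: "(real \<times> real \<Rightarrow> real^4) \<Rightarrow> real \<times> real \<Rightarrow> real^4" where
  "mean_curv f p = (1/2) *\<^sub>R (\<Sum>i<2. \<Sum>j<2. ginv f i j p *\<^sub>R sff f i j p)"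

definition quasi_minimal :: "(real \<times> real) set \<Rightarrow> (real \<times> real \<Rightarrow> real^4) \<Rightarrow> bool" where
  "quasi_minimal U f = (\<forall>p\<in>U. mean_curv f p \<noteq> 0 \<and> ip (mean_curv f p) (mean_curv f p) = 0)"

text \<open>Parallel mean curvature: D_{d_i} H = (d_i H)^normal = 0.\<close>
definition parallel_H :: "(real \<times> real) set \<Rightarrow> (real \<times> real \<Rightarrow> real^4) \<Rightarrow> bool" where
  "parallel_H U f = (\<forall>p\<in>U. \<forall>i<2. nproj f p (pd i (mean_curv f) p) = 0)"

text \<open>Laplacian with the paper's sign convention: Delta phi = - g^{ij}(d_i d_j phi - Gamma^k_{ij} d_k phi).\<close>
definition lap :: "(real \<times> real \<Rightarrow> real^4) \<Rightarrow> (real \<times> real \<Rightarrow> 'a::real_normed_vector) \<Rightarrow> real \<times> real \<Rightarrow> 'a" where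
  "lap f \<phi> p = - (\<Sum>i<2. \<Sum>j<2. ginv f i j p *\<^sub>R
      (pd i (pd j \<phi>) p - (\<Sum>k<2. chr f k i j p *\<^sub>R pd k \<phi> p)))"

text \<open>Bivectors in wedge^2 E^4_2 represented as antisymmetric 4x4 arrays: (a wedge b)_{ij} = a_i b_j - a_j b_i.\<close>
definition wedge :: "real^4 \<Rightarrow> real^4 \<Rightarrow> real^4^4" where
  "wedge a b = (\<chi> i j. a $ i * b $ j - a $ j * b $ i)"

text \<open>Gauss map G = x wedge y for a null frame with <x,y> = -1; equals +-(f_u wedge f_v)/sqrt(-det g).\<close>
definition gauss_map :: "(real \<times> real \<Rightarrow> real^4) \<Rightarrow> real \<times> real \<Rightarrow> real^4^4" where
  "gauss_map f p = (1 / sqrt (- detg f p)) *\<^sub>R wedge (pd 0 f p) (pd 1 f p)"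

definition harmonic_gauss_map :: "(real \<times> real) set \<Rightarrow> (real \<times> real \<Rightarrow> real^4) \<Rightarrow> bool" where
  "harmonic_gauss_map U f = (\<forall>p\<in>U. lap f (gauss_map f) p = 0)"

definition lorentz_surface :: "(real \<times> real) set \<Rightarrow> (real \<times> real \<Rightarrow> real^4) \<Rightarrow> bool" where
  "lorentz_surface U f = (open U \<and> smooth_on U f \<and> (\<forall>p\<in>U. detg f p < 0))"

end

theory Submission
  imports Defs
begin


lemmas sum4 = sum_4

lemma eps4_simps[simp]: "eps4 1 = 1" "eps4 2 = 1" "eps4 3 = -1" "eps4 4 = -1"
  by (auto simp: eps4_def)

lemma eps4_sq[simp]: "eps4 i * eps4 i = 1"
  by (auto simp: eps4_def)

lemma ip_sym: "ip a b = ip b a"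
  unfolding ip_def by (simp add: mult.commute mult.left_commute)

lemma ip_add_left: "ip (a + b) c = ip a c + ip b c"
  and ip_add_right: "ip c (a + b) = ip c a + ip c b"
  and ip_diff_left: "ip (a - b) c = ip a c - ip b c"
  and ip_diff_right: "ip c (a - b) = ip c a - ip c b"
  and ip_scaleR_left: "ip (r *\<^sub>R a) c = r * ip a c"
  and ip_scaleR_right: "ip c (r *\<^sub>R a) = r * ip c a"
  and ip_minus_left: "ip (- a) c = - ip a c"
  and ip_minus_right: "ip c (- a) = - ip c a"
  and ip_zero_left: "ip 0 c = 0"
  and ip_zero_right: "ip c 0 = 0"
  unfolding ip_def
  by (auto simp: algebra_simps sum.distrib sum_subtractf sum_distrib_left sum_negf)

lemma ip_sum_left: "ip (\<Sum>k\<in>A. v k) c = (\<Sum>k\<in>A. ip (v k) c)"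
  by (induction A rule: infinite_finite_induct) (auto simp: ip_add_left ip_zero_left)
lemma ip_sum_right: "ip c (\<Sum>k\<in>A. v k) = (\<Sum>k\<in>A. ip c (v k))"
  by (induction A rule: infinite_finite_induct) (auto simp: ip_add_right ip_zero_right)

lemmas ip_lin = ip_add_left ip_add_right ip_diff_left ip_diff_right ip_scaleR_left
  ip_scaleR_right ip_minus_left ip_minus_right ip_zero_left ip_zero_right ip_sum_left ip_sum_right

lemma ip_nondeg: assumes "\<And>e. ip v e = 0" shows "v = 0"
proof -
  have "v $ k = 0" for k
  proof -
    have "ip v (axis k 1) = eps4 k * v $ k"
      unfolding ip_def axis_def
      by (simp add: sum.delta[of UNIV k, simplified] if_distrib cong: if_cong)
    with assms[of "axis k 1"] show ?thesis by (auto simp: eps4_def split: if_splits)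
  qed
  then show ?thesis by (simp add: vec_eq_iff)
qed

lemma bilinear_ip: "bilinear ip"
  unfolding bilinear_def by (auto intro!: linearI simp: ip_lin)

lemma bb_ip: "bounded_bilinear ip"
  using bilinear_ip bilinear_conv_bounded_bilinear by blast

lemma wedge_add_left: "wedge (a + b) c = wedge a c + wedge b c"
  and wedge_add_right: "wedge c (a + b) = wedge c a + wedge c b"
  and wedge_diff_left: "wedge (a - b) c = wedge a c - wedge b c"
  and wedge_diff_right: "wedge c (a - b) = wedge c a - wedge c b"
  and wedge_scaleR_left: "wedge (r *\<^sub>R a) c = r *\<^sub>R wedge a c"
  and wedge_scaleR_right: "wedge c (r *\<^sub>R a) = r *\<^sub>R wedge c a"
  and wedge_minus_left: "wedge (- a) c = - wedge a c"
  and wedge_minus_right: "wedge c (- a) = - wedge c a"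
  and wedge_zero_left: "wedge 0 c = 0"
  and wedge_zero_right: "wedge c 0 = 0"
  and wedge_self: "wedge a a = 0"
  and wedge_anti: "wedge b a = - wedge a b"
  unfolding wedge_def by (auto simp: vec_eq_iff algebra_simps)

lemma wedge_sum_left: "wedge (\<Sum>k\<in>A. v k) c = (\<Sum>k\<in>A. wedge (v k) c)"
  by (induction A rule: infinite_finite_induct) (auto simp: wedge_add_left wedge_zero_left)
lemma wedge_sum_right: "wedge c (\<Sum>k\<in>A. v k) = (\<Sum>k\<in>A. wedge c (v k))"
  by (induction A rule: infinite_finite_induct) (auto simp: wedge_add_right wedge_zero_right)

lemma bilinear_wedge: "bilinear wedge"
  unfolding bilinear_def by (auto intro!: linearI simp: wedge_add_left wedge_add_right
    wedge_scaleR_left wedge_scaleR_right)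

lemma bb_wedge: "bounded_bilinear wedge"
  using bilinear_wedge bilinear_conv_bounded_bilinear by blast

definition bip :: "real^4^4 \<Rightarrow> real^4^4 \<Rightarrow> real" where
  "bip A B = (1/2) * (\<Sum>i\<in>UNIV. \<Sum>j\<in>UNIV. eps4 i * eps4 j * A $ i $ j * B $ i $ j)"

lemma bip_add_left: "bip (A + B) C = bip A C + bip B C"
  and bip_diff_left: "bip (A - B) C = bip A C - bip B C"
  and bip_scaleR_left: "bip (r *\<^sub>R A) C = r * bip A C"
  and bip_minus_left: "bip (- A) C = - bip A C"
  and bip_zero_left: "bip 0 C = 0"
  unfolding bip_def
  by (auto simp: algebra_simps sum.distrib sum_subtractf sum_distrib_left sum_negf)

lemma bip_sum_left: "bip (\<Sum>k\<in>A. v k) c = (\<Sum>k\<in>A. bip (v k) c)"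
  by (induction A rule: infinite_finite_induct) (auto simp: bip_add_left bip_zero_left)

lemma bip_wedge: "bip (wedge a b) (wedge c d) = ip a c * ip b d - ip a d * ip b c"
  unfolding bip_def wedge_def ip_def
  by (simp add: sum4 algebra_simps eps4_def)


section \<open>Partial derivatives calculus\<close>

definition ei :: "nat \<Rightarrow> real \<times> real" where "ei i = (if i = 0 then (1, 0) else (0, 1))"

lemma pd_eq: "pd i \<phi> p = frechet_derivative \<phi> (at p) (ei i)"
  unfolding pd_def ei_def by simp

lemma pd_hasd: "(\<phi> has_derivative D) (at p) \<Longrightarrow> pd i \<phi> p = D (ei i)"
  unfolding pd_eq using frechet_derivative_at by metis

lemma pd_bil:
  assumes "bounded_bilinear B" "\<phi> differentiable at p" "\<psi> differentiable at p"
  shows "pd i (\<lambda>q. B (\<phi> q) (\<psi> q)) p = B (pd i \<phi> p) (\<psi> p) + B (\<phi> p) (pd i \<psi> p)"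
proof -
  have "((\<lambda>q. B (\<phi> q) (\<psi> q)) has_derivative
     (\<lambda>h. B (\<phi> p) (frechet_derivative \<psi> (at p) h) + B (frechet_derivative \<phi> (at p) h) (\<psi> p))) (at p)"
    using bounded_bilinear.FDERIV[OF assms(1) frechet_derivative_works[THEN iffD1, OF assms(2)]
        frechet_derivative_works[THEN iffD1, OF assms(3)]] .
  from pd_hasd[OF this, of i] show ?thesis by (simp add: pd_eq add.commute)
qed

lemma diff_bil:
  assumes "bounded_bilinear B" "\<phi> differentiable at p" "\<psi> differentiable at p"
  shows "(\<lambda>q. B (\<phi> q) (\<psi> q)) differentiable at p"
  using bounded_bilinear.FDERIV[OF assms(1) frechet_derivative_works[THEN iffD1, OF assms(2)]
        frechet_derivative_works[THEN iffD1, OF assms(3)]]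
  unfolding differentiable_def by blast

lemma fdw: "\<phi> differentiable at p \<Longrightarrow> (\<phi> has_derivative frechet_derivative \<phi> (at p)) (at p)"
  using frechet_derivative_works by blast

lemma pd_add: "\<phi> differentiable at p \<Longrightarrow> \<psi> differentiable at p \<Longrightarrow>
   pd i (\<lambda>q. \<phi> q + \<psi> q) p = pd i \<phi> p + pd i \<psi> p"
  unfolding pd_eq by (rule pd_hasd[unfolded pd_eq], rule has_derivative_add) (rule fdw, assumption)+

lemma pd_diff: "\<phi> differentiable at p \<Longrightarrow> \<psi> differentiable at p \<Longrightarrow>
   pd i (\<lambda>q. \<phi> q - \<psi> q) p = pd i \<phi> p - pd i \<psi> p"
  unfolding pd_eq by (rule pd_hasd[unfolded pd_eq], rule has_derivative_diff) (rule fdw, assumption)+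

lemma pd_minus: "\<phi> differentiable at p \<Longrightarrow> pd i (\<lambda>q. - \<phi> q) p = - pd i \<phi> p"
  unfolding pd_eq by (rule pd_hasd[unfolded pd_eq], rule has_derivative_minus) (rule fdw, assumption)+

lemma pd_const: "pd i (\<lambda>q. c) p = 0"
proof -
  have "pd i (\<lambda>q. c) p = (\<lambda>h. 0) (ei i)" by (rule pd_hasd, rule has_derivative_const)
  then show ?thesis by simp
qed

lemma pd_sum: "finite A \<Longrightarrow> (\<And>k. k \<in> A \<Longrightarrow> \<phi> k differentiable at p) \<Longrightarrow>
   pd i (\<lambda>q. \<Sum>k\<in>A. \<phi> k q) p = (\<Sum>k\<in>A. pd i (\<phi> k) p)"
proof (induction A rule: finite_induct)
  case empty then show ?case by (simp add: pd_const)
next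
  case (insert x F)
  have d: "(\<lambda>q. \<Sum>k\<in>F. \<phi> k q) differentiable at p"
    using insert by (auto intro!: differentiable_sum)
  show ?case using insert pd_add[OF _ d, of "\<phi> x" i] by simp
qed

lemma pd_comp_real:
  fixes g :: "real \<Rightarrow> real" and \<phi> :: "real \<times> real \<Rightarrow> real"
  assumes "DERIV g (\<phi> p) :> g'" "\<phi> differentiable at p"
  shows "pd i (\<lambda>q. g (\<phi> q)) p = pd i \<phi> p * g'"
proof -
  have "((\<lambda>q. g (\<phi> q)) has_derivative (\<lambda>h. frechet_derivative \<phi> (at p) h * g')) (at p)"
    using DERIV_compose_FDERIV[where f=g and g=\<phi> and x=p and s=UNIV, OF assms(1) fdw[OF assms(2)]] .
  from pd_hasd[OF this, of i] show ?thesis by (simp add: pd_eq)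
qed

lemma diff_comp_real:
  fixes g :: "real \<Rightarrow> real" and \<phi> :: "real \<times> real \<Rightarrow> real"
  assumes "DERIV g (\<phi> p) :> g'" "\<phi> differentiable at p"
  shows "(\<lambda>q. g (\<phi> q)) differentiable at p"
  using DERIV_compose_FDERIV[where f=g and g=\<phi> and x=p and s=UNIV, OF assms(1) fdw[OF assms(2)]]
  unfolding differentiable_def by blast

lemma pd_cong:
  assumes "open U" "p \<in> U" "\<And>q. q \<in> U \<Longrightarrow> \<phi> q = \<psi> q"
  shows "pd i \<phi> p = pd i \<psi> p"
proof -
  have "(\<lambda>D. (\<phi> has_derivative D) (at p)) = (\<lambda>D. (\<psi> has_derivative D) (at p))"
  proof (intro ext iffI)
    fix D assume "(\<phi> has_derivative D) (at p)"
    then show "(\<psi> has_derivative D) (at p)"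
      by (rule has_derivative_transform_within_open[OF _ assms(1,2)]) (simp add: assms(3))
  next
    fix D assume "(\<psi> has_derivative D) (at p)"
    then show "(\<phi> has_derivative D) (at p)"
      by (rule has_derivative_transform_within_open[OF _ assms(1,2)]) (simp add: assms(3))
  qed
  then show ?thesis unfolding pd_def frechet_derivative_def by simp
qed

lemma diff_cong:
  assumes "open U" "p \<in> U" "\<And>q. q \<in> U \<Longrightarrow> \<phi> q = \<psi> q" "\<psi> differentiable at p"
  shows "\<phi> differentiable at p"
proof -
  obtain D where "(\<psi> has_derivative D) (at p)" using assms(4) unfolding differentiable_def by blast
  then have "(\<phi> has_derivative D) (at p)"
    by (rule has_derivative_transform_within_open[OF _ assms(1,2)]) (simp add: assms(3))
  then show ?thesis unfolding differentiable_def by blast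
qed

lemma pd_zero:
  assumes "open U" "p \<in> U" "\<And>q. q \<in> U \<Longrightarrow> \<phi> q = c"
  shows "pd i \<phi> p = 0"
  using pd_cong[OF assms, where i=i] pd_const[of i c p] by simp

section \<open>Symmetry of second partial derivatives\<close>

lemma fd_lin: "(\<phi> has_derivative D) (at q) \<Longrightarrow> D (a, b) = a *\<^sub>R D (1,0) + b *\<^sub>R D (0,1)"
proof -
  assume "(\<phi> has_derivative D) (at q)"
  then interpret linear D by (rule has_derivative_linear)
  have "(a,b) = a *\<^sub>R (1,0) + b *\<^sub>R (0,1)" by simp
  then show ?thesis by (simp only: add scale)
qed

lemma line0:
  assumes "\<phi> differentiable at (p + (s, c))"
  shows "((\<lambda>s. \<phi> (p + (s, c))) has_derivative (\<lambda>h. h *\<^sub>R pd 0 \<phi> (p + (s,c)))) (at s within S)"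
proof -
  have D: "(\<phi> has_derivative frechet_derivative \<phi> (at (p + (s,c)))) (at (p + (s,c)))"
    using assms frechet_derivative_works by blast
  have "((\<lambda>s. p + (s, c)) has_derivative (\<lambda>h. 0 + (h, 0))) (at s within S)"
    by (intro has_derivative_add has_derivative_const has_derivative_Pair has_derivative_ident)
  from has_derivative_compose[OF this D]
  have "((\<lambda>s. \<phi> (p + (s, c))) has_derivative (\<lambda>h. frechet_derivative \<phi> (at (p + (s,c))) (h, 0))) (at s within S)"
    by simp
  moreover have "(\<lambda>h. frechet_derivative \<phi> (at (p + (s,c))) (h, 0)) = (\<lambda>h. h *\<^sub>R pd 0 \<phi> (p + (s,c)))"
  proof
    fix h show "frechet_derivative \<phi> (at (p + (s,c))) (h, 0) = h *\<^sub>R pd 0 \<phi> (p + (s,c))"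
      using fd_lin[OF D, of h 0] unfolding pd_def by simp
  qed
  ultimately show ?thesis by simp
qed

lemma line1:
  assumes "\<phi> differentiable at (p + (c, s))"
  shows "((\<lambda>s. \<phi> (p + (c, s))) has_derivative (\<lambda>h. h *\<^sub>R pd 1 \<phi> (p + (c,s)))) (at s within S)"
proof -
  have D: "(\<phi> has_derivative frechet_derivative \<phi> (at (p + (c,s)))) (at (p + (c,s)))"
    using assms frechet_derivative_works by blast
  have "((\<lambda>s. p + (c, s)) has_derivative (\<lambda>h. 0 + (0, h))) (at s within S)"
    by (intro has_derivative_add has_derivative_const has_derivative_Pair has_derivative_ident)
  from has_derivative_compose[OF this D]
  have "((\<lambda>s. \<phi> (p + (c, s))) has_derivative (\<lambda>h. frechet_derivative \<phi> (at (p + (c,s))) (0, h))) (at s within S)"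
    by simp
  moreover have "(\<lambda>h. frechet_derivative \<phi> (at (p + (c,s))) (0, h)) = (\<lambda>h. h *\<^sub>R pd 1 \<phi> (p + (c,s)))"
  proof
    fix h show "frechet_derivative \<phi> (at (p + (c,s))) (0, h) = h *\<^sub>R pd 1 \<phi> (p + (c,s))"
      using fd_lin[OF D, of 0 h] unfolding pd_def by simp
  qed
  ultimately show ?thesis by simp
qed

lemma onorm_scale: "onorm (\<lambda>h::real. h *\<^sub>R v) \<le> norm v"
  by (rule onorm_le) (simp add: mult.commute)


lemma pair_norm_le2: "a \<in> {0..t} \<Longrightarrow> b \<in> {0..t} \<Longrightarrow> norm (a::real, b::real) \<le> 2 * t"
  using norm_Pair_le[of a b] by auto

lemma schwarz:
  fixes \<phi> :: "real \<times> real \<Rightarrow> 'b::real_normed_vector"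
  assumes U: "open U" "p \<in> U" and d: "\<And>q. q \<in> U \<Longrightarrow> \<phi> differentiable at q"
    and dA0: "pd 0 \<phi> differentiable at p" and dB0: "pd 1 \<phi> differentiable at p"
  shows "pd 1 (pd 0 \<phi>) p = pd 0 (pd 1 \<phi>) p"
proof -
  define A where "A = pd 0 \<phi>"
  define B where "B = pd 1 \<phi>"
  define w1 where "w1 = pd 1 A p"
  define w2 where "w2 = pd 0 B p"
  define DA where "DA = frechet_derivative A (at p)"
  define DB where "DB = frechet_derivative B (at p)"
  have DA: "(A has_derivative DA) (at p)" unfolding DA_def A_def by (rule fdw) (rule dA0)
  have DB: "(B has_derivative DB) (at p)" unfolding DB_def B_def by (rule fdw) (rule dB0)
  have DAl: "DA (a, b) - DA (a, 0) = b *\<^sub>R w1" for a b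
    using fd_lin[OF DA, of a b] fd_lin[OF DA, of a 0] unfolding w1_def pd_def DA_def by simp
  have DBl: "DB (a, b) - DB (0, b) = a *\<^sub>R w2" for a b
    using fd_lin[OF DB, of a b] fd_lin[OF DB, of 0 b] unfolding w2_def pd_def DB_def by simp
  have key: "norm (w1 - w2) \<le> 8 * e" if e: "e > 0" for e
  proof -
    obtain dA where dA: "dA > 0" "\<And>y. norm (y - p) < dA \<Longrightarrow> norm (A y - A p - DA (y - p)) \<le> e * norm (y - p)"
      using DA[unfolded has_derivative_at_alt] e by blast
    obtain dB where dB: "dB > 0" "\<And>y. norm (y - p) < dB \<Longrightarrow> norm (B y - B p - DB (y - p)) \<le> e * norm (y - p)"
      using DB[unfolded has_derivative_at_alt] e by blast
    obtain r where r: "r > 0" "ball p r \<subseteq> U" using U open_contains_ball by blast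
    define t where "t = min dA (min dB r) / 4"
    have t: "t > 0" "2 * t < dA" "2 * t < dB" "2 * t < r" using dA dB r by (auto simp: t_def)
    have inU: "p + (a, b) \<in> U" if "a \<in> {0..t}" "b \<in> {0..t}" for a b
    proof -
      have "dist p (p + (a,b)) = norm (a,b)" by (metis add_diff_cancel_left' dist_commute dist_norm)
      then have "dist p (p + (a,b)) < r" using pair_norm_le2[OF that] t by simp
      then show ?thesis using r by auto
    qed
    have nA: "norm (A (p + (a,b)) - A p - DA (a,b)) \<le> e * (2 * t)" if "a \<in> {0..t}" "b \<in> {0..t}" for a b
    proof -
      have "norm (A (p + (a,b)) - A p - DA (a,b)) \<le> e * norm (a, b)"
        using dA(2)[of "p + (a,b)"] pair_norm_le2[OF that] t by simp
      also have "\<dots> \<le> e * (2 * t)" using pair_norm_le2[OF that] e by (intro mult_left_mono) auto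
      finally show ?thesis .
    qed
    have nB: "norm (B (p + (a,b)) - B p - DB (a,b)) \<le> e * (2 * t)" if "a \<in> {0..t}" "b \<in> {0..t}" for a b
    proof -
      have "norm (B (p + (a,b)) - B p - DB (a,b)) \<le> e * norm (a, b)"
        using dB(2)[of "p + (a,b)"] pair_norm_le2[OF that] t by simp
      also have "\<dots> \<le> e * (2 * t)" using pair_norm_le2[OF that] e by (intro mult_left_mono) auto
      finally show ?thesis .
    qed
    have t0: "t \<in> {0..t}" "0 \<in> {0..t}" using t by auto
    define \<Delta> where "\<Delta> = \<phi> (p + (t,t)) - \<phi> (p + (t,0)) - \<phi> (p + (0,t)) + \<phi> p"
    have c1: "norm (\<Delta> - (t * t) *\<^sub>R w1) \<le> 4 * e * t * t"
    proof -
      define \<beta> where "\<beta> \<sigma> = \<phi> (p + (\<sigma>, t)) - \<phi> (p + (\<sigma>, 0)) - \<sigma> *\<^sub>R (t *\<^sub>R w1)" for \<sigma>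
      define V where "V \<sigma> = A (p + (\<sigma>, t)) - A (p + (\<sigma>, 0)) - t *\<^sub>R w1" for \<sigma>
      have der: "(\<beta> has_derivative (\<lambda>h. h *\<^sub>R V \<sigma>)) (at \<sigma> within {0..t})" if "\<sigma> \<in> {0..t}" for \<sigma>
      proof -
        have "((\<lambda>\<sigma>. \<phi> (p + (\<sigma>, t)) - \<phi> (p + (\<sigma>, 0)) - \<sigma> *\<^sub>R (t *\<^sub>R w1)) has_derivative
           (\<lambda>h. h *\<^sub>R A (p + (\<sigma>, t)) - h *\<^sub>R A (p + (\<sigma>, 0)) - h *\<^sub>R (t *\<^sub>R w1))) (at \<sigma> within {0..t})"
          unfolding A_def
          by (intro has_derivative_diff line0 d inU bounded_linear.has_derivative[OF bounded_linear_scaleR_left]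
              has_derivative_ident) (use that t in auto)
        then show ?thesis unfolding \<beta>_def[abs_def] V_def
          by (rule has_derivative_eq_rhs) (simp add: fun_eq_iff algebra_simps)
      qed
      have bnd: "onorm (\<lambda>h. h *\<^sub>R V \<sigma>) \<le> 4 * e * t" if "\<sigma> \<in> {0..t}" for \<sigma>
      proof -
        have "V \<sigma> = (A (p + (\<sigma>,t)) - A p - DA (\<sigma>,t)) - (A (p + (\<sigma>,0)) - A p - DA (\<sigma>,0))"
          using DAl[of \<sigma> t] unfolding V_def by (simp add: algebra_simps)
        then have "norm (V \<sigma>) \<le> norm (A (p + (\<sigma>,t)) - A p - DA (\<sigma>,t)) + norm (A (p + (\<sigma>,0)) - A p - DA (\<sigma>,0))"
          by (simp only: norm_triangle_ineq4)
        then have "norm (V \<sigma>) \<le> e * (2 * t) + e * (2 * t)"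
          using nA[OF that t0(1)] nA[OF that t0(2)] by linarith
        then show ?thesis using onorm_scale[of "V \<sigma>"] by linarith
      qed
      have "norm (\<beta> t - \<beta> 0) \<le> 4 * e * t * norm (t - 0)"
        by (rule differentiable_bound[of "{0..t}" \<beta> "\<lambda>\<sigma> h. h *\<^sub>R V \<sigma>"]) (use der bnd t in auto)
      moreover have "\<beta> t - \<beta> 0 = \<Delta> - (t * t) *\<^sub>R w1" unfolding \<beta>_def \<Delta>_def by (simp add: zero_prod_def[symmetric])
      ultimately show ?thesis using t by simp
    qed
    have c2: "norm (\<Delta> - (t * t) *\<^sub>R w2) \<le> 4 * e * t * t"
    proof -
      define \<gamma> where "\<gamma> \<tau> = \<phi> (p + (t, \<tau>)) - \<phi> (p + (0, \<tau>)) - \<tau> *\<^sub>R (t *\<^sub>R w2)" for \<tau>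
      define V where "V \<tau> = B (p + (t, \<tau>)) - B (p + (0, \<tau>)) - t *\<^sub>R w2" for \<tau>
      have der: "(\<gamma> has_derivative (\<lambda>h. h *\<^sub>R V \<tau>)) (at \<tau> within {0..t})" if "\<tau> \<in> {0..t}" for \<tau>
      proof -
        have "((\<lambda>\<tau>. \<phi> (p + (t, \<tau>)) - \<phi> (p + (0, \<tau>)) - \<tau> *\<^sub>R (t *\<^sub>R w2)) has_derivative
           (\<lambda>h. h *\<^sub>R B (p + (t, \<tau>)) - h *\<^sub>R B (p + (0, \<tau>)) - h *\<^sub>R (t *\<^sub>R w2))) (at \<tau> within {0..t})"
          unfolding B_def
          by (intro has_derivative_diff line1 d inU bounded_linear.has_derivative[OF bounded_linear_scaleR_left]
              has_derivative_ident) (use that t in auto)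
        then show ?thesis unfolding \<gamma>_def[abs_def] V_def
          by (rule has_derivative_eq_rhs) (simp add: fun_eq_iff algebra_simps)
      qed
      have bnd: "onorm (\<lambda>h. h *\<^sub>R V \<tau>) \<le> 4 * e * t" if "\<tau> \<in> {0..t}" for \<tau>
      proof -
        have "V \<tau> = (B (p + (t,\<tau>)) - B p - DB (t,\<tau>)) - (B (p + (0,\<tau>)) - B p - DB (0,\<tau>))"
          using DBl[of t \<tau>] unfolding V_def by (simp add: algebra_simps)
        then have "norm (V \<tau>) \<le> norm (B (p + (t,\<tau>)) - B p - DB (t,\<tau>)) + norm (B (p + (0,\<tau>)) - B p - DB (0,\<tau>))"
          by (simp only: norm_triangle_ineq4)
        then have "norm (V \<tau>) \<le> e * (2 * t) + e * (2 * t)"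
          using nB[OF t0(1) that] nB[OF t0(2) that] by linarith
        then show ?thesis using onorm_scale[of "V \<tau>"] by linarith
      qed
      have "norm (\<gamma> t - \<gamma> 0) \<le> 4 * e * t * norm (t - 0)"
        by (rule differentiable_bound[of "{0..t}" \<gamma> "\<lambda>\<sigma> h. h *\<^sub>R V \<sigma>"]) (use der bnd t in auto)
      moreover have "\<gamma> t - \<gamma> 0 = \<Delta> - (t * t) *\<^sub>R w2" unfolding \<gamma>_def \<Delta>_def by (simp add: algebra_simps zero_prod_def[symmetric])
      ultimately show ?thesis using t by simp
    qed
    have "norm ((t * t) *\<^sub>R (w1 - w2)) \<le> 4 * e * t * t + 4 * e * t * t"
    proof -
      have "(t * t) *\<^sub>R (w1 - w2) = (\<Delta> - (t * t) *\<^sub>R w2) - (\<Delta> - (t * t) *\<^sub>R w1)"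
        by (simp add: algebra_simps)
      then have "norm ((t * t) *\<^sub>R (w1 - w2)) \<le> norm (\<Delta> - (t * t) *\<^sub>R w2) + norm (\<Delta> - (t * t) *\<^sub>R w1)"
        by (simp only: norm_triangle_ineq4)
      then show ?thesis using c1 c2 by linarith
    qed
    moreover have "norm ((t * t) *\<^sub>R (w1 - w2)) = (t * t) * norm (w1 - w2)" using t by simp
    ultimately have "(t * t) * norm (w1 - w2) \<le> (t * t) * (8 * e)" by (simp add: algebra_simps)
    then show ?thesis using t by (simp add: mult_le_cancel_left_pos)
  qed
  have "norm (w1 - w2) = 0"
  proof (rule ccontr)
    assume "norm (w1 - w2) \<noteq> 0"
    then have pos: "norm (w1 - w2) > 0" by simp
    from key[of "norm (w1 - w2) / 16"] pos show False by simp
  qed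
  then show ?thesis unfolding w1_def w2_def A_def B_def by simp
qed


lemma sum2: "(\<Sum>k<2. a k) = a 0 + a (1::nat)"
  by (simp add: numeral_2_eq_2)

lemma pd_idx: "pd i = pd (if i = 0 then 0 else 1)"
  unfolding pd_def[abs_def] by (auto intro!: ext)

lemma pd_1: "i \<noteq> 0 \<Longrightarrow> pd i = pd 1"
  by (subst pd_idx) simp

lemma pd_cases: assumes "pd i = pd 0 \<Longrightarrow> P" "pd i = pd 1 \<Longrightarrow> P" shows P
proof (cases "i = 0")
  case True then show ?thesis using assms by simp
next
  case False then show ?thesis using assms pd_1[OF False] by simp
qed

lemma pd_div:
  fixes \<phi> \<psi> :: "real \<times> real \<Rightarrow> real"
  assumes "\<phi> differentiable at p" "\<psi> differentiable at p" "\<psi> p \<noteq> 0"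
  shows "pd i (\<lambda>q. \<phi> q / \<psi> q) p = (pd i \<phi> p * \<psi> p - \<phi> p * pd i \<psi> p) / (\<psi> p)^2"
proof -
  have di: "DERIV inverse (\<psi> p) :> - (inverse (\<psi> p) ^ 2)"
    using DERIV_inverse[of "\<psi> p"] assms(3) by (simp add: power2_eq_square)
  have "pd i (\<lambda>q. \<phi> q * inverse (\<psi> q)) p = pd i \<phi> p * inverse (\<psi> p) + \<phi> p * pd i (\<lambda>q. inverse (\<psi> q)) p"
    using pd_bil[OF bounded_bilinear_mult assms(1) diff_comp_real[OF di assms(2)]] .
  also have "pd i (\<lambda>q. inverse (\<psi> q)) p = pd i \<psi> p * - (inverse (\<psi> p) ^ 2)"
    by (rule pd_comp_real[OF di assms(2)])
  finally show ?thesis using assms(3)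
    by (simp add: inverse_eq_divide field_simps power2_eq_square)
qed

lemma diff_div:
  fixes \<phi> \<psi> :: "real \<times> real \<Rightarrow> real"
  assumes "\<phi> differentiable at p" "\<psi> differentiable at p" "\<psi> p \<noteq> 0"
  shows "(\<lambda>q. \<phi> q / \<psi> q) differentiable at p"
proof -
  have di: "DERIV inverse (\<psi> p) :> - (inverse (\<psi> p) ^ 2)"
    using DERIV_inverse[of "\<psi> p"] assms(3) by (simp add: power2_eq_square)
  show ?thesis using diff_bil[OF bounded_bilinear_mult assms(1) diff_comp_real[OF di assms(2)]]
    by (simp add: divide_inverse)
qed

locale surf =
  fixes U :: "(real \<times> real) set" and f :: "real \<times> real \<Rightarrow> real^4"
  assumes opn: "open U" and smth: "smooth_on U f" and dneg: "\<And>q. q \<in> U \<Longrightarrow> detg f q < 0"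
begin

lemma reg: "f differentiable_on U" "pd a f differentiable_on U" "pd a (pd b f) differentiable_on U"
proof -
  have C': "Ck_on (Suc (Suc (Suc 0))) U f" using smth unfolding smooth_on_def by blast
  then have c0: "f differentiable_on U" and c1: "pd 0 f differentiable_on U" "pd 1 f differentiable_on U"
    and c2: "pd 0 (pd 0 f) differentiable_on U" "pd 1 (pd 0 f) differentiable_on U"
       "pd 0 (pd 1 f) differentiable_on U" "pd 1 (pd 1 f) differentiable_on U"
    by (simp_all only: Ck_on.simps)
  show "f differentiable_on U" by (rule c0)
  show "pd a f differentiable_on U"
    using c1 by (cases "a = 0") (simp_all add: pd_1[of a])
  show "pd a (pd b f) differentiable_on U"
    using c2 by (cases "a = 0"; cases "b = 0") (simp_all add: pd_1[of a] pd_1[of b])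
qed

lemma dat: assumes "\<phi> differentiable_on U" "q \<in> U" shows "\<phi> differentiable at q"
  using assms(1)[unfolded differentiable_on_def, rule_format, OF assms(2)] at_within_open[OF assms(2) opn]
  by simp

lemma dF0: "q \<in> U \<Longrightarrow> f differentiable at q" by (rule dat[OF reg(1)])
lemma dF1: "q \<in> U \<Longrightarrow> pd a f differentiable at q" by (rule dat[OF reg(2)])
lemma dF2: "q \<in> U \<Longrightarrow> pd a (pd b f) differentiable at q" by (rule dat[OF reg(3)])

lemma sym2: "q \<in> U \<Longrightarrow> pd i (pd j f) q = pd j (pd i f) q"
proof -
  assume q: "q \<in> U"
  have s: "pd 1 (pd 0 f) q = pd 0 (pd 1 f) q"
    by (rule schwarz[OF opn q]) (use dF0 dF1 q in auto)
  show ?thesis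
    using s by (cases "i = 0"; cases "j = 0") (simp_all add: pd_1[of i] pd_1[of j])
qed

lemma sym3a: "q \<in> U \<Longrightarrow> pd i (pd j (pd k f)) q = pd j (pd i (pd k f)) q"
proof -
  assume q: "q \<in> U"
  have s: "pd 1 (pd 0 (pd k f)) q = pd 0 (pd 1 (pd k f)) q"
    by (rule schwarz[OF opn q]) (use dF1 dF2 q in auto)
  show ?thesis
    using s by (cases "i = 0"; cases "j = 0") (simp_all add: pd_1[of i] pd_1[of j])
qed

lemma sym3b: "q \<in> U \<Longrightarrow> pd i (pd j (pd k f)) q = pd i (pd k (pd j f)) q"
  by (rule pd_cong[OF opn]) (auto intro: sym2)

lemma gm_fun: "gm f j l = (\<lambda>q. ip (pd j f q) (pd l f q))"
  unfolding gm_def by simp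

lemma gm_sym: "gm f i j q = gm f j i q"
  unfolding gm_def by (rule ip_sym)

lemma dgm: "q \<in> U \<Longrightarrow> pd i (gm f j l) q = ip (pd i (pd j f) q) (pd l f q) + ip (pd j f q) (pd i (pd l f) q)"
  unfolding gm_fun by (rule pd_bil[OF bb_ip dF1 dF1])

lemma diff_gm: "q \<in> U \<Longrightarrow> gm f j l differentiable at q"
  unfolding gm_fun by (rule diff_bil[OF bb_ip dF1 dF1])

lemma detg_ne: assumes "q \<in> U" shows "detg f q \<noteq> 0"
  using dneg[OF assms] by simp

lemma ginv_sym: "ginv f i j q = ginv f j i q"
  unfolding ginv_def by auto

lemma chr_eq: "q \<in> U \<Longrightarrow> chr f k i j q = (\<Sum>l<2. ginv f k l q * ip (pd i (pd j f) q) (pd l f q))"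
proof -
  assume q: "q \<in> U"
  have "pd i (gm f j l) q + pd j (gm f i l) q - pd l (gm f i j) q = 2 * ip (pd i (pd j f) q) (pd l f q)" for l
    unfolding dgm[OF q] using sym2[OF q, of i j] sym2[OF q, of i l] sym2[OF q, of j l]
    by (simp add: ip_sym)
  then show ?thesis unfolding chr_def by (simp add: sum_distrib_left)
qed

end


lemma sum2_alg: "(\<Sum>k<2. a k) = a 0 + a (1::nat)"
  by (simp add: numeral_2_eq_2)

lemma wedge_comp: "wedge a b $ i $ j = a $ i * b $ j - a $ j * b $ i"
  unfolding wedge_def by simp


context surf begin

lemma ginv_expl: "ginv f i j q = (if i = 0 \<and> j = 0 then gm f 1 1 q
      else if i = 1 \<and> j = 1 then gm f 0 0 q else - gm f 0 1 q) * inverse (detg f q)"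
  unfolding ginv_def by (simp add: divide_inverse)

lemma detinv: assumes q: "q \<in> U"
  shows "inverse (detg f q) * (gm f 0 0 q * gm f 1 1 q - gm f 0 1 q * gm f 0 1 q) = 1"
  using detg_ne[OF q] gm_sym[of 1 0 q] unfolding detg_def by simp

lemma alg4: fixes a b c i :: real assumes "i * (a * c - b * b) = 1"
  shows "(c * i) * a + (- b * i) * b = 1" "(c * i) * b + (- b * i) * c = 0"
    "(- b * i) * a + (a * i) * b = 0" "(- b * i) * b + (a * i) * c = 1"
  using assms by (simp_all add: algebra_simps)

lemma ginv_inv: assumes q: "q \<in> U" and k: "k < 2" and m: "m < 2"
  shows "(\<Sum>l<2. ginv f k l q * gm f l m q) = (if k = m then 1 else 0)"
proof -
  note A = alg4[OF detinv[OF q]]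
  have g10: "gm f 1 0 q = gm f 0 1 q" by (rule gm_sym)
  have "k = 0 \<or> k = 1" "m = 0 \<or> m = 1" using k m by auto
  then show ?thesis unfolding ginv_expl sum2 g10
    using A gm_sym[of "Suc 0" 0 q] by (elim disjE) (simp_all add: g10)
qed

definition tc :: "real \<times> real \<Rightarrow> real^4 \<Rightarrow> nat \<Rightarrow> real" where
  "tc q v k = (\<Sum>l<2. ginv f k l q * ip v (pd l f q))"

lemma nproj_alt: "nproj f q v = v - (\<Sum>k<2. tc q v k *\<^sub>R pd k f q)"
  unfolding nproj_def tc_def sum2 using ginv_sym[of 1 0 q]
  by (simp add: algebra_simps)

lemma tc_add: "tc q (v + w) k = tc q v k + tc q w k"
  and tc_diff: "tc q (v - w) k = tc q v k - tc q w k"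
  and tc_scaleR: "tc q (r *\<^sub>R v) k = r * tc q v k"
  and tc_zero: "tc q 0 k = 0"
  unfolding tc_def sum2 by (simp_all add: ip_lin algebra_simps)

lemma nproj_add: "nproj f q (v + w) = nproj f q v + nproj f q w"
  and nproj_diff: "nproj f q (v - w) = nproj f q v - nproj f q w"
  and nproj_scaleR: "nproj f q (r *\<^sub>R v) = r *\<^sub>R nproj f q v"
  and nproj_zero: "nproj f q 0 = 0"
  unfolding nproj_alt sum2 tc_add tc_diff tc_scaleR tc_zero by (simp_all add: algebra_simps)

lemma nproj_sum: "nproj f q (\<Sum>k\<in>A. v k) = (\<Sum>k\<in>A. nproj f q (v k))"
  by (induction A rule: infinite_finite_induct) (auto simp: nproj_add nproj_zero)

lemma tc_F: assumes q: "q \<in> U" and "k < 2" "m < 2"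
  shows "tc q (pd m f q) k = (if k = m then 1 else 0)"
proof -
  have "tc q (pd m f q) k = (\<Sum>l<2. ginv f k l q * gm f l m q)"
    unfolding tc_def gm_def by (simp add: ip_sym)
  then show ?thesis using ginv_inv[OF assms] by simp
qed

lemma nproj_F: assumes q: "q \<in> U" and "m < 2" shows "nproj f q (pd m f q) = 0"
proof -
  have "m = 0 \<or> m = 1" using assms by auto
  then show ?thesis unfolding nproj_alt sum2 using tc_F[OF q, of 0 m] tc_F[OF q, of 1 m] assms
    by auto
qed

lemma nproj_perp: assumes q: "q \<in> U" and m: "m < 2" shows "ip (nproj f q v) (pd m f q) = 0"
proof -
  have "ip (nproj f q v) (pd m f q) = ip v (pd m f q) - (\<Sum>k<2. tc q v k * gm f k m q)"
    unfolding nproj_alt by (simp add: ip_lin gm_def)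
  also have "(\<Sum>k<2. tc q v k * gm f k m q) = (\<Sum>l<2. ip v (pd l f q) * (\<Sum>k<2. ginv f l k q * gm f k m q))"
    unfolding tc_def sum2 using ginv_sym[of 1 0 q] by (simp add: algebra_simps)
  also have "\<dots> = ip v (pd m f q)"
    using ginv_inv[OF q _ m, of 0] ginv_inv[OF q _ m, of 1] m unfolding sum2
    by (cases "m = 0") (auto simp: less_2_cases_iff)
  finally show ?thesis by simp
qed

lemma nproj_idem: assumes "ip v (pd 0 f q) = 0" "ip v (pd 1 f q) = 0" shows "nproj f q v = v"
  unfolding nproj_alt tc_def sum2 using assms by simp

lemma sff_perp: "q \<in> U \<Longrightarrow> m < 2 \<Longrightarrow> ip (sff f i j q) (pd m f q) = 0"
  unfolding sff_def by (rule nproj_perp)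

lemma sff_sym: "q \<in> U \<Longrightarrow> sff f i j q = sff f j i q"
  unfolding sff_def using sym2 by simp

lemma tc_F2: "q \<in> U \<Longrightarrow> tc q (pd i (pd j f) q) k = chr f k i j q"
  unfolding tc_def chr_eq by simp

lemma F2_dec: "q \<in> U \<Longrightarrow> pd i (pd j f) q = (\<Sum>k<2. chr f k i j q *\<^sub>R pd k f q) + sff f i j q"
  unfolding sff_def nproj_alt by (simp add: tc_F2)

lemma ip_sff_F2: assumes q: "q \<in> U"
  shows "ip (sff f i a q) (pd j (pd l f) q) = ip (sff f i a q) (sff f j l q)"
  unfolding F2_dec[OF q, of j l] sum2 using sff_perp[OF q, of 0 i a] sff_perp[OF q, of 1 i a]
  by (simp add: ip_lin)

end


context surf begin

lemma detg_fun: "detg f = (\<lambda>q. gm f 0 0 q * gm f 1 1 q - gm f 0 1 q * gm f 1 0 q)"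
  unfolding detg_def[abs_def] by simp

lemma diff_detg: "q \<in> U \<Longrightarrow> detg f differentiable at q"
  unfolding detg_fun
  by (intro differentiable_diff diff_bil[OF bounded_bilinear_mult] diff_gm)

lemma pd_detg: assumes q: "q \<in> U"
  shows "pd i (detg f) q = pd i (gm f 0 0) q * gm f 1 1 q + gm f 0 0 q * pd i (gm f 1 1) q
     - (pd i (gm f 0 1) q * gm f 1 0 q + gm f 0 1 q * pd i (gm f 1 0) q)"
  unfolding detg_fun
  by (simp add: pd_diff diff_bil[OF bounded_bilinear_mult] diff_gm[OF q]
      pd_bil[OF bounded_bilinear_mult diff_gm[OF q] diff_gm[OF q]])

definition E :: "nat \<Rightarrow> nat \<Rightarrow> real \<times> real \<Rightarrow> real" where
  "E k l q = (if k = 0 \<and> l = 0 then gm f 1 1 q else if k = 1 \<and> l = 1 then gm f 0 0 q else - gm f 0 1 q)"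

lemma ginv_fun: "ginv f k l = (\<lambda>q. E k l q / detg f q)"
  unfolding ginv_def[abs_def] E_def by simp

lemma E_fun: "E k l = (if k = 0 \<and> l = 0 then gm f 1 1 else if k = 1 \<and> l = 1 then gm f 0 0 else (\<lambda>q. - gm f 0 1 q))"
  unfolding E_def[abs_def] by auto

lemma diff_E: "q \<in> U \<Longrightarrow> E k l differentiable at q"
  unfolding E_fun by (auto intro!: diff_gm differentiable_minus)

lemma diff_ginv: "q \<in> U \<Longrightarrow> ginv f k l differentiable at q"
  unfolding ginv_fun by (rule diff_div[OF diff_E diff_detg detg_ne])

lemma pd_E: "q \<in> U \<Longrightarrow> pd a (E k l) q = (if k = 0 \<and> l = 0 then pd a (gm f 1 1) q
    else if k = 1 \<and> l = 1 then pd a (gm f 0 0) q else - pd a (gm f 0 1) q)"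
  unfolding E_fun by (auto simp: pd_minus diff_gm)

lemma pd_ginv: "q \<in> U \<Longrightarrow> pd a (ginv f k l) q =
   (pd a (E k l) q * detg f q - E k l q * pd a (detg f) q) / (detg f q)^2"
  unfolding ginv_fun by (rule pd_div[OF diff_E diff_detg detg_ne])

lemma ipF2_sym: "ip (pd j f q) (pd a (pd l f) q) = ip (pd a (pd l f) q) (pd j f q)"
  by (rule ip_sym)

lemma one_suc: "(1::nat) = Suc 0" by simp

lemma pd_detg_chr: assumes q: "q \<in> U"
  shows "pd a (detg f) q = 2 * detg f q * (chr f 0 a 0 q + chr f 1 a 1 q)"
proof -
  have d: "detg f q \<noteq> 0" by (rule detg_ne[OF q])
  have dd: "detg f q = gm f 0 0 q * gm f 1 1 q - gm f 0 1 q * gm f 0 1 q"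
    using gm_sym[of 1 0 q] unfolding detg_def by simp
  show ?thesis
    unfolding pd_detg[OF q] dgm[OF q] chr_eq[OF q] sum2 ginv_def
    by (simp add: ipF2_sym d gm_sym[of 1 0 q] gm_sym[of "Suc 0" 0 q] field_simps)
qed

lemma dginv: assumes q: "q \<in> U" and kl: "k < 2" "l < 2"
  shows "pd a (ginv f k l) q = - (\<Sum>m<2. ginv f k m q * chr f l a m q + chr f k a m q * ginv f m l q)"
proof -
  have d: "detg f q \<noteq> 0" by (rule detg_ne[OF q])
  have dd: "detg f q = gm f 0 0 q * gm f 1 1 q - gm f 0 1 q * gm f 0 1 q"
    using gm_sym[of 1 0 q] unfolding detg_def by simp
  have "k = 0 \<or> k = 1" "l = 0 \<or> l = 1" using kl by auto
  then show ?thesis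
    unfolding pd_ginv[OF q] pd_E[OF q] pd_detg[OF q] dgm[OF q] chr_eq[OF q] sum2 ginv_def E_def
    apply (elim disjE)
    apply (simp_all add: ipF2_sym d gm_sym[of 1 0 q] gm_sym[of "Suc 0" 0 q] field_simps power2_eq_square)
    apply (simp_all add: dd algebra_simps)
    done
qed

end


lemma deriv_isqrt: fixes x :: real assumes x: "x < 0"
  shows "DERIV (\<lambda>x. inverse (sqrt (- x))) x :> inverse (sqrt (- x)) ^ 3 / 2"
proof -
  have s: "DERIV (\<lambda>x. sqrt (- x)) x :> inverse (sqrt (- x)) / 2 * (- 1)"
    by (rule DERIV_chain2[OF DERIV_real_sqrt]) (use x in \<open>auto intro!: derivative_eq_intros\<close>)
  have ne: "sqrt (- x) \<noteq> 0" using x by simp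
  show ?thesis
    by (rule DERIV_cong[OF DERIV_inverse'[OF s ne]]) (simp add: power3_eq_cube)
qed

lemma diff_sum: "(\<And>k. \<phi> k differentiable at p) \<Longrightarrow> (\<lambda>q. \<Sum>k\<in>A. \<phi> k q) differentiable at p"
  by (cases "finite A") (auto intro!: differentiable_sum)

context surf begin

definition sfun :: "real \<times> real \<Rightarrow> real" where "sfun q = inverse (sqrt (- detg f q))"

definition Wf :: "real \<times> real \<Rightarrow> real^4^4" where "Wf q = wedge (pd 0 f q) (pd 1 f q)"

definition Pf :: "nat \<Rightarrow> real \<times> real \<Rightarrow> real^4^4" where
  "Pf i q = wedge (sff f i 0 q) (pd 1 f q) + wedge (pd 0 f q) (sff f i 1 q)"

lemma gauss_fun: "gauss_map f = (\<lambda>q. sfun q *\<^sub>R Wf q)"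
  unfolding gauss_map_def[abs_def] sfun_def Wf_def by (simp add: inverse_eq_divide)

lemma diff_sfun: "q \<in> U \<Longrightarrow> sfun differentiable at q"
  unfolding sfun_def[abs_def] by (rule diff_comp_real[OF deriv_isqrt[OF dneg] diff_detg])

lemma sfun_sq: "q \<in> U \<Longrightarrow> sfun q * sfun q * detg f q = -1"
proof -
  assume q: "q \<in> U"
  have "sqrt (- detg f q) * sqrt (- detg f q) = - detg f q" using dneg[OF q] by simp
  then show ?thesis unfolding sfun_def using dneg[OF q]
    by (simp add: field_simps)
qed

lemma dsfun: assumes q: "q \<in> U"
  shows "pd i sfun q = - sfun q * (chr f 0 i 0 q + chr f 1 i 1 q)"
proof -
  have "pd i sfun q = pd i (detg f) q * (sfun q ^ 3 / 2)"
    unfolding sfun_def[abs_def] by (rule pd_comp_real[OF deriv_isqrt[OF dneg[OF q]] diff_detg[OF q]])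
  also have "\<dots> = (sfun q * sfun q * detg f q) * sfun q * (chr f 0 i 0 q + chr f 1 i 1 q)"
    unfolding pd_detg_chr[OF q] by (simp add: power3_eq_cube algebra_simps)
  finally show ?thesis using sfun_sq[OF q] by simp
qed

lemma diff_W: "q \<in> U \<Longrightarrow> Wf differentiable at q"
  unfolding Wf_def[abs_def] by (rule diff_bil[OF bb_wedge dF1 dF1])

lemma pd_W: "q \<in> U \<Longrightarrow> pd i Wf q = (chr f 0 i 0 q + chr f 1 i 1 q) *\<^sub>R Wf q + Pf i q"
proof -
  assume q: "q \<in> U"
  have "pd i Wf q = wedge (pd i (pd 0 f) q) (pd 1 f q) + wedge (pd 0 f q) (pd i (pd 1 f) q)"
    unfolding Wf_def[abs_def] by (rule pd_bil[OF bb_wedge dF1[OF q] dF1[OF q]])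
  also have "\<dots> = (chr f 0 i 0 q + chr f 1 i 1 q) *\<^sub>R Wf q + Pf i q"
    unfolding F2_dec[OF q] sum2 Wf_def Pf_def
    by (simp add: wedge_add_left wedge_add_right wedge_scaleR_left wedge_scaleR_right wedge_self
        algebra_simps)
  finally show ?thesis .
qed

lemma dG: assumes q: "q \<in> U" shows "pd i (gauss_map f) q = sfun q *\<^sub>R Pf i q"
proof -
  have "pd i (gauss_map f) q = pd i sfun q *\<^sub>R Wf q + sfun q *\<^sub>R pd i Wf q"
    unfolding gauss_fun by (rule pd_bil[OF bounded_bilinear_scaleR diff_sfun[OF q] diff_W[OF q]])
  then show ?thesis unfolding dsfun[OF q] pd_W[OF q] by (simp add: algebra_simps)
qed

lemma sff_fun: "sff f i a = (\<lambda>q. pd i (pd a f) q - (\<Sum>k<2. tc q (pd i (pd a f) q) k *\<^sub>R pd k f q))"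
  unfolding sff_def[abs_def] nproj_alt by simp

lemma diff_tcF2: "q \<in> U \<Longrightarrow> (\<lambda>q. tc q (pd i (pd a f) q) k) differentiable at q"
  unfolding tc_def
  by (intro diff_sum diff_bil[OF bounded_bilinear_mult] diff_ginv diff_bil[OF bb_ip] dF1 dF2)

lemma diff_sff: "q \<in> U \<Longrightarrow> sff f i a differentiable at q"
  unfolding sff_fun
  by (intro differentiable_diff diff_sum diff_bil[OF bounded_bilinear_scaleR] diff_tcF2 dF1 dF2)

lemma dsff_nor: assumes q: "q \<in> U"
  shows "nproj f q (pd j (sff f i a) q) = nproj f q (pd j (pd i (pd a f)) q) - (\<Sum>l<2. chr f l i a q *\<^sub>R sff f j l q)"
proof -
  have "pd j (sff f i a) q = pd j (pd i (pd a f)) q -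
      (\<Sum>k<2. pd j (\<lambda>q. tc q (pd i (pd a f) q) k) q *\<^sub>R pd k f q + tc q (pd i (pd a f) q) k *\<^sub>R pd j (pd k f) q)"
    unfolding sff_fun
    by (simp add: pd_diff pd_sum diff_sum diff_bil[OF bounded_bilinear_scaleR] diff_tcF2[OF q]
       dF1[OF q] dF2[OF q] pd_bil[OF bounded_bilinear_scaleR diff_tcF2[OF q] dF1[OF q]])
  then show ?thesis
    unfolding sum2 using nproj_F[OF q, of 0] nproj_F[OF q, of 1]
    by (simp add: nproj_diff nproj_add nproj_scaleR tc_F2[OF q] sff_def)
qed

lemma dsff_tan: assumes q: "q \<in> U" and l: "l < 2"
  shows "ip (pd j (sff f i a) q) (pd l f q) = - ip (sff f i a q) (sff f j l q)"
proof -
  have "pd j (\<lambda>q. ip (sff f i a q) (pd l f q)) q = 0"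
    by (rule pd_zero[OF opn q]) (use sff_perp l in auto)
  moreover have "pd j (\<lambda>q. ip (sff f i a q) (pd l f q)) q =
      ip (pd j (sff f i a) q) (pd l f q) + ip (sff f i a q) (pd j (pd l f) q)"
    by (rule pd_bil[OF bb_ip diff_sff[OF q] dF1[OF q]])
  ultimately show ?thesis using ip_sff_F2[OF q] by simp
qed

lemma dsff: assumes q: "q \<in> U"
  shows "pd j (sff f i a) q = (\<Sum>k<2. (- (\<Sum>l<2. ginv f k l q * ip (sff f i a q) (sff f j l q))) *\<^sub>R pd k f q)
     + (nproj f q (pd j (pd i (pd a f)) q) - (\<Sum>l<2. chr f l i a q *\<^sub>R sff f j l q))"
proof -
  have "pd j (sff f i a) q = nproj f q (pd j (sff f i a) q) + (\<Sum>k<2. tc q (pd j (sff f i a) q) k *\<^sub>R pd k f q)"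
    unfolding nproj_alt by simp
  also have "(\<Sum>k<2. tc q (pd j (sff f i a) q) k *\<^sub>R pd k f q)
     = (\<Sum>k<2. (- (\<Sum>l<2. ginv f k l q * ip (sff f i a q) (sff f j l q))) *\<^sub>R pd k f q)"
    unfolding tc_def sum2 using dsff_tan[OF q, of 0] dsff_tan[OF q, of 1] by simp
  finally show ?thesis unfolding dsff_nor[OF q] by simp
qed

lemma H_fun: "mean_curv f = (\<lambda>q. (1/2) *\<^sub>R (\<Sum>i<2. \<Sum>j<2. ginv f i j q *\<^sub>R sff f i j q))"
  unfolding mean_curv_def[abs_def] by simp

lemma diff_H: "q \<in> U \<Longrightarrow> mean_curv f differentiable at q"
  unfolding H_fun
  by (intro diff_sum diff_bil[OF bounded_bilinear_scaleR] differentiable_const diff_ginv diff_sff)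

lemma nproj_sff: "q \<in> U \<Longrightarrow> nproj f q (sff f i j q) = sff f i j q"
  by (rule nproj_idem) (auto intro: sff_perp)

lemma dH_nor: assumes q: "q \<in> U"
  shows "nproj f q (pd a (mean_curv f) q) = (1/2) *\<^sub>R (\<Sum>i<2. \<Sum>j<2. pd a (ginv f i j) q *\<^sub>R sff f i j q
     + ginv f i j q *\<^sub>R (nproj f q (pd a (pd i (pd j f)) q) - (\<Sum>l<2. chr f l i j q *\<^sub>R sff f a l q)))"
proof -
  have "pd a (mean_curv f) q = (1/2) *\<^sub>R (\<Sum>i<2. \<Sum>j<2. pd a (ginv f i j) q *\<^sub>R sff f i j q
     + ginv f i j q *\<^sub>R pd a (sff f i j) q)"
    unfolding H_fun
    by (simp add: pd_bil[OF bounded_bilinear_scaleR differentiable_const] pd_const pd_sum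
        diff_sum diff_bil[OF bounded_bilinear_scaleR] diff_ginv[OF q] diff_sff[OF q]
        pd_bil[OF bounded_bilinear_scaleR diff_ginv[OF q] diff_sff[OF q]])
  then show ?thesis
    by (simp add: nproj_scaleR nproj_sum nproj_add nproj_sff[OF q] dsff_nor[OF q])
qed

end


lemma lap_alg2:
  fixes x :: "nat \<Rightarrow> real^4" and h :: "nat \<Rightarrow> nat \<Rightarrow> real^4" and n :: "nat \<Rightarrow> nat \<Rightarrow> nat \<Rightarrow> real^4"
    and gi :: "nat \<Rightarrow> nat \<Rightarrow> real" and G :: "nat \<Rightarrow> nat \<Rightarrow> nat \<Rightarrow> real" and s :: real
    and P :: "nat \<Rightarrow> real^4^4" and dP :: "nat \<Rightarrow> nat \<Rightarrow> real^4^4" and FF :: "nat \<Rightarrow> nat \<Rightarrow> real^4"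
    and D :: "nat \<Rightarrow> nat \<Rightarrow> nat \<Rightarrow> real^4" and dgi :: "nat \<Rightarrow> nat \<Rightarrow> nat \<Rightarrow> real"
    and DH :: "nat \<Rightarrow> real^4" and ds :: "nat \<Rightarrow> real"
  assumes h10: "h 1 0 = h 0 1" and gi10: "gi 1 0 = gi 0 1"
    and G10: "\<And>k. G k 1 0 = G k 0 1"
    and n010: "n 0 1 0 = n 0 0 1" and n100: "n 1 0 0 = n 0 0 1"
    and n101: "n 1 0 1 = n 0 1 1" and n110: "n 1 1 0 = n 0 1 1"
    and a_P: "\<And>j. P j = wedge (h j 0) (x 1) + wedge (x 0) (h j 1)"
    and a_F2: "\<And>i b. FF i b = (\<Sum>k<2. G k i b *\<^sub>R x k) + h i b"
    and a_D: "\<And>i j a. D i j a = (\<Sum>k<2. (- (\<Sum>l<2. gi k l * ip (h j a) (h i l))) *\<^sub>R x k)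
                  + (n i j a - (\<Sum>l<2. G l j a *\<^sub>R h i l))"
    and a_dP: "\<And>i j. dP i j = wedge (D i j 0) (x 1) + wedge (h j 0) (FF i 1) + wedge (FF i 0) (h j 1) + wedge (x 0) (D i j 1)"
    and a_dgi: "\<And>a i j. i < 2 \<Longrightarrow> j < 2 \<Longrightarrow> dgi a i j = - (\<Sum>k<2. gi i k * G j a k + G i a k * gi k j)"
    and a_DH: "\<And>a. DH a = (1/2) *\<^sub>R (\<Sum>i<2. \<Sum>j<2. dgi a i j *\<^sub>R h i j + gi i j *\<^sub>R (n a i j - (\<Sum>l<2. G l i j *\<^sub>R h a l)))"
    and a_ds: "\<And>i. ds i = - s * (G 0 i 0 + G 1 i 1)"
  shows "- (\<Sum>i<2. \<Sum>j<2. gi i j *\<^sub>R (ds i *\<^sub>R P j + s *\<^sub>R dP i j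
            - (\<Sum>k<2. G k i j *\<^sub>R (s *\<^sub>R P k))))
        = ((\<Sum>i<2. \<Sum>j<2. \<Sum>k<2. \<Sum>l<2. gi i j * gi k l * ip (h i k) (h j l)) * s) *\<^sub>R wedge (x 0) (x 1)
          - (2 * s) *\<^sub>R (wedge (DH 0) (x 1) - wedge (DH 1) (x 0))
          - (2 * s) *\<^sub>R (gi 0 0 *\<^sub>R wedge (h 0 0) (h 0 1) + gi 0 1 *\<^sub>R wedge (h 0 0) (h 1 1) + gi 1 1 *\<^sub>R wedge (h 0 1) (h 1 1))"
proof -
  have e: "A = B" if "\<And>a b. A $ a $ b = B $ a $ b" for A B :: "real^4^4"
    using that by (simp add: vec_eq_iff)
  note syms = h10 gi10 G10 n010 n100 n101 n110
  have syms': "h (Suc 0) 0 = h 0 (Suc 0)" "gi (Suc 0) 0 = gi 0 (Suc 0)" "\<And>k. G k (Suc 0) 0 = G k 0 (Suc 0)"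
    "n 0 (Suc 0) 0 = n 0 0 (Suc 0)" "n (Suc 0) 0 0 = n 0 0 (Suc 0)" "n (Suc 0) 0 (Suc 0) = n 0 (Suc 0) (Suc 0)"
    "n (Suc 0) (Suc 0) 0 = n 0 (Suc 0) (Suc 0)"
    using syms by simp_all
  show ?thesis
    apply (rule e)
    apply (simp add: a_P a_F2 a_D a_dP a_dgi a_DH a_ds sum2 syms syms' wedge_comp
       ip_sym[of "h 1 1" "h 0 0"] ip_sym[of "h 0 1" "h 0 0"] ip_sym[of "h 1 1" "h 0 1"])
    apply (simp add: field_simps syms' ip_sym[of "h (Suc 0) (Suc 0)" "h 0 0"] ip_sym[of "h 0 (Suc 0)" "h 0 0"] ip_sym[of "h (Suc 0) (Suc 0)" "h 0 (Suc 0)"])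
    done
qed


context surf begin

lemma diff_Pf: "q \<in> U \<Longrightarrow> Pf j differentiable at q"
  unfolding Pf_def[abs_def]
  by (intro differentiable_add diff_bil[OF bb_wedge] diff_sff dF1)

lemma dPf: assumes p: "p \<in> U"
  shows "pd i (Pf j) p = wedge (pd i (sff f j 0) p) (pd 1 f p) + wedge (sff f j 0 p) (pd i (pd 1 f) p)
     + wedge (pd i (pd 0 f) p) (sff f j 1 p) + wedge (pd 0 f p) (pd i (sff f j 1) p)"
  unfolding Pf_def[abs_def]
  by (simp add: pd_add diff_bil[OF bb_wedge] diff_sff[OF p] dF1[OF p]
      pd_bil[OF bb_wedge diff_sff[OF p] dF1[OF p]] pd_bil[OF bb_wedge dF1[OF p] diff_sff[OF p]])

lemma ddG: assumes p: "p \<in> U"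
  shows "pd i (pd j (gauss_map f)) p = pd i sfun p *\<^sub>R Pf j p + sfun p *\<^sub>R pd i (Pf j) p"
proof -
  have "pd i (pd j (gauss_map f)) p = pd i (\<lambda>q. sfun q *\<^sub>R Pf j q) p"
    by (rule pd_cong[OF opn p]) (rule dG)
  also have "\<dots> = pd i sfun p *\<^sub>R Pf j p + sfun p *\<^sub>R pd i (Pf j) p"
    by (rule pd_bil[OF bounded_bilinear_scaleR diff_sfun[OF p] diff_Pf[OF p]])
  finally show ?thesis .
qed

lemma chr_sym: "q \<in> U \<Longrightarrow> chr f k i j q = chr f k j i q"
  unfolding chr_eq using sym2 by simp

lemma n_sym: assumes q: "q \<in> U"
  shows "pd 0 (pd 1 (pd 0 f)) q = pd 0 (pd 0 (pd 1 f)) q"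
    "pd 1 (pd 0 (pd 0 f)) q = pd 0 (pd 0 (pd 1 f)) q"
    "pd 1 (pd 0 (pd 1 f)) q = pd 0 (pd 1 (pd 1 f)) q"
    "pd 1 (pd 1 (pd 0 f)) q = pd 0 (pd 1 (pd 1 f)) q"
  using sym3a[OF q] sym3b[OF q] by metis+

definition hn :: "real \<times> real \<Rightarrow> real" where
  "hn q = (\<Sum>i<2. \<Sum>j<2. \<Sum>k<2. \<Sum>l<2. ginv f i j q * ginv f k l q * ip (sff f i k q) (sff f j l q))"

definition Nn :: "real \<times> real \<Rightarrow> real^4^4" where
  "Nn q = ginv f 0 0 q *\<^sub>R wedge (sff f 0 0 q) (sff f 0 1 q) + ginv f 0 1 q *\<^sub>R wedge (sff f 0 0 q) (sff f 1 1 q)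
     + ginv f 1 1 q *\<^sub>R wedge (sff f 0 1 q) (sff f 1 1 q)"

definition DH :: "nat \<Rightarrow> real \<times> real \<Rightarrow> real^4" where
  "DH a q = nproj f q (pd a (mean_curv f) q)"

lemma lap_main: assumes p: "p \<in> U"
  shows "lap f (gauss_map f) p = (hn p * sfun p) *\<^sub>R Wf p
     - (2 * sfun p) *\<^sub>R (wedge (DH 0 p) (pd 1 f p) - wedge (DH 1 p) (pd 0 f p)) - (2 * sfun p) *\<^sub>R Nn p"
proof -
  have L: "lap f (gauss_map f) p = - (\<Sum>i<2. \<Sum>j<2. ginv f i j p *\<^sub>R (pd i sfun p *\<^sub>R Pf j p + sfun p *\<^sub>R pd i (Pf j) p
            - (\<Sum>k<2. chr f k i j p *\<^sub>R (sfun p *\<^sub>R Pf k p))))"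
    unfolding lap_def ddG[OF p] dG[OF p] ..
  show ?thesis unfolding L hn_def Nn_def DH_def Wf_def
  proof (rule lap_alg2[where x = "\<lambda>k. pd k f p" and h = "\<lambda>i j. sff f i j p"
        and n = "\<lambda>i j k. nproj f p (pd i (pd j (pd k f)) p)" and gi = "\<lambda>i j. ginv f i j p"
        and G = "\<lambda>k i j. chr f k i j p" and s = "sfun p" and P = "\<lambda>j. Pf j p"
        and dP = "\<lambda>i j. pd i (Pf j) p" and FF = "\<lambda>i b. pd i (pd b f) p"
        and D = "\<lambda>i j a. pd i (sff f j a) p" and dgi = "\<lambda>a i j. pd a (ginv f i j) p"
        and DH = "\<lambda>a. nproj f p (pd a (mean_curv f) p)" and ds = "\<lambda>i. pd i sfun p"])
    show "sff f 1 0 p = sff f 0 1 p" by (rule sff_sym[OF p])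
    show "ginv f 1 0 p = ginv f 0 1 p" by (rule ginv_sym)
    show "\<And>k. chr f k 1 0 p = chr f k 0 1 p" by (rule chr_sym[OF p])
    show "nproj f p (pd 0 (pd 1 (pd 0 f)) p) = nproj f p (pd 0 (pd 0 (pd 1 f)) p)"
         "nproj f p (pd 1 (pd 0 (pd 0 f)) p) = nproj f p (pd 0 (pd 0 (pd 1 f)) p)"
         "nproj f p (pd 1 (pd 0 (pd 1 f)) p) = nproj f p (pd 0 (pd 1 (pd 1 f)) p)"
         "nproj f p (pd 1 (pd 1 (pd 0 f)) p) = nproj f p (pd 0 (pd 1 (pd 1 f)) p)"
      using n_sym[OF p] by simp_all
    show "\<And>j. Pf j p = wedge (sff f j 0 p) (pd 1 f p) + wedge (pd 0 f p) (sff f j 1 p)"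
      by (simp add: Pf_def)
    show "\<And>i b. pd i (pd b f) p = (\<Sum>k<2. chr f k i b p *\<^sub>R pd k f p) + sff f i b p"
      by (rule F2_dec[OF p])
    show "\<And>i j a. pd i (sff f j a) p = (\<Sum>k<2. (- (\<Sum>l<2. ginv f k l p * ip (sff f j a p) (sff f i l p))) *\<^sub>R pd k f p)
                  + (nproj f p (pd i (pd j (pd a f)) p) - (\<Sum>l<2. chr f l j a p *\<^sub>R sff f i l p))"
      by (rule dsff[OF p])
    show "\<And>i j. pd i (Pf j) p = wedge (pd i (sff f j 0) p) (pd 1 f p) + wedge (sff f j 0 p) (pd i (pd 1 f) p)
     + wedge (pd i (pd 0 f) p) (sff f j 1 p) + wedge (pd 0 f p) (pd i (sff f j 1) p)"
      by (rule dPf[OF p])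
    show "\<And>a i j. i < 2 \<Longrightarrow> j < 2 \<Longrightarrow> pd a (ginv f i j) p = - (\<Sum>k<2. ginv f i k p * chr f j a k p + chr f i a k p * ginv f k j p)"
      by (rule dginv[OF p])
    show "\<And>a. nproj f p (pd a (mean_curv f) p) = (1/2) *\<^sub>R (\<Sum>i<2. \<Sum>j<2. pd a (ginv f i j) p *\<^sub>R sff f i j p
       + ginv f i j p *\<^sub>R (nproj f p (pd a (pd i (pd j f)) p) - (\<Sum>l<2. chr f l i j p *\<^sub>R sff f a l p)))"
      by (rule dH_nor[OF p])
    show "\<And>i. pd i sfun p = - sfun p * (chr f 0 i 0 p + chr f 1 i 1 p)"
      by (rule dsfun[OF p])
  qed
qed

end


context surf begin

lemma low: assumes q: "q \<in> U" and l: "l < 2"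
  shows "ip (pd a (pd b f) q) (pd l f q) = (\<Sum>k<2. gm f l k q * chr f k a b q)"
  unfolding F2_dec[OF q] sum2 using sff_perp[OF q l, of a b]
  by (simp add: ip_lin gm_def ip_sym[of "pd l f q"] mult.commute)

lemma F2F2: assumes q: "q \<in> U"
  shows "ip (pd a (pd b f) q) (pd c (pd d f) q) =
    (\<Sum>k<2. \<Sum>l<2. chr f k a b q * chr f l c d q * gm f k l q) + ip (sff f a b q) (sff f c d q)"
proof -
  have "ip (sff f a b q) (pd k f q) = 0" "ip (pd k f q) (sff f c d q) = 0" if "k < 2" for k
    using sff_perp[OF q that] by (auto simp: ip_sym)
  then show ?thesis unfolding F2_dec[OF q, of a b] F2_dec[OF q, of c d] sum2
    by (simp add: ip_lin gm_def algebra_simps)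
qed

lemma diff_chr: "q \<in> U \<Longrightarrow> chr f l k i differentiable at q"
  by (rule diff_cong[OF opn _ chr_eq])
     (auto intro!: diff_sum diff_bil[OF bounded_bilinear_mult] diff_ginv diff_bil[OF bb_ip] dF1 dF2)

lemma pdlow: assumes p: "p \<in> U"
  shows "(\<Sum>l<2. gm f 0 l p * pd j (chr f l k i) p) =
     ip (pd j (pd k (pd i f)) p) (pd 0 f p) + ip (pd k (pd i f) p) (pd j (pd 0 f) p)
     - (\<Sum>l<2. pd j (gm f 0 l) p * chr f l k i p)"
proof -
  have "pd j (\<lambda>q. \<Sum>l<2. gm f 0 l q * chr f l k i q) p = pd j (\<lambda>q. ip (pd k (pd i f) q) (pd 0 f q)) p"
    by (rule pd_cong[OF opn p]) (simp add: low[of _ 0] del: sum2)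
  also have "\<dots> = ip (pd j (pd k (pd i f)) p) (pd 0 f p) + ip (pd k (pd i f) p) (pd j (pd 0 f) p)"
    by (rule pd_bil[OF bb_ip dF2[OF p] dF1[OF p]])
  finally have e: "pd j (\<lambda>q. \<Sum>l<2. gm f 0 l q * chr f l k i q) p = \<dots>" .
  have "pd j (\<lambda>q. \<Sum>l<2. gm f 0 l q * chr f l k i q) p =
      (\<Sum>l<2. pd j (gm f 0 l) p * chr f l k i p + gm f 0 l p * pd j (chr f l k i) p)"
    by (simp add: pd_sum diff_bil[OF bounded_bilinear_mult] diff_gm[OF p] diff_chr[OF p]
        pd_bil[OF bounded_bilinear_mult diff_gm[OF p] diff_chr[OF p]] del: sum2)
  with e show ?thesis by (simp add: sum.distrib algebra_simps)
qed

lemma gauss_eq: assumes p: "p \<in> U"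
  shows "gauss_curv f p * detg f p = ip (sff f 0 0 p) (sff f 1 1 p) - ip (sff f 0 1 p) (sff f 0 1 p)"
proof -
  have "gauss_curv f p * detg f p = (\<Sum>l<2. gm f 0 l p * riem f l 1 0 1 p)"
    unfolding gauss_curv_def using detg_ne[OF p] by simp
  also have "\<dots> = (\<Sum>l<2. gm f 0 l p * pd 0 (chr f l 1 1) p) - (\<Sum>l<2. gm f 0 l p * pd 1 (chr f l 0 1) p)
      + (\<Sum>l<2. gm f 0 l p * (\<Sum>m<2. chr f l 0 m p * chr f m 1 1 p - chr f l 1 m p * chr f m 0 1 p))"
    unfolding riem_def by (simp add: algebra_simps sum.distrib sum_subtractf)
  also have "\<dots> = ip (pd 1 (pd 1 f) p) (pd 0 (pd 0 f) p) - ip (pd 0 (pd 1 f) p) (pd 1 (pd 0 f) p)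
      - (\<Sum>l<2. pd 0 (gm f 0 l) p * chr f l 1 1 p) + (\<Sum>l<2. pd 1 (gm f 0 l) p * chr f l 0 1 p)
      + (\<Sum>l<2. gm f 0 l p * (\<Sum>m<2. chr f l 0 m p * chr f m 1 1 p - chr f l 1 m p * chr f m 0 1 p))"
    unfolding pdlow[OF p] using sym3a[OF p, of 0 1 1] by simp
  also have "\<dots> = ip (sff f 0 0 p) (sff f 1 1 p) - ip (sff f 0 1 p) (sff f 0 1 p)"
    unfolding F2F2[OF p] dgm[OF p] sum2
    using low[OF p, of 0] low[OF p, of 1] chr_sym[OF p] sff_sym[OF p, of 1 0] gm_sym[of 1 0 p] gm_sym[of "Suc 0" 0 p]
      chr_sym[OF p, of _ "Suc 0" 0] sff_sym[OF p, of "Suc 0" 0]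
    by (simp add: ip_sym[of "pd _ f p" "pd _ (pd _ f) p"] ip_sym[of "sff f 1 1 p" "sff f 0 0 p"]
        ip_sym[of "sff f (Suc 0) (Suc 0) p" "sff f 0 0 p"] sum2 algebra_simps)
  finally show ?thesis .
qed

lemma detginv: assumes p: "p \<in> U"
  shows "ginv f 0 0 p * ginv f 1 1 p - ginv f 0 1 p * ginv f 0 1 p = 1 / detg f p"
proof -
  have d: "detg f p \<noteq> 0" by (rule detg_ne[OF p])
  have dd: "detg f p = gm f 0 0 p * gm f 1 1 p - gm f 0 1 p * gm f 0 1 p"
    using gm_sym[of 1 0 p] unfolding detg_def by simp
  show ?thesis unfolding ginv_def
    apply (simp add: d field_simps power2_eq_square)
    apply (simp add: dd algebra_simps)
    done
qed

lemma two_vec: "(2::real^4) * v = 2 *\<^sub>R v"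
  by (simp add: vec_eq_iff)

lemma hn_poly: assumes p: "p \<in> U"
  shows "hn p - 4 * ip (mean_curv f p) (mean_curv f p) =
    2 * (ginv f 0 0 p * ginv f 1 1 p - ginv f 0 1 p * ginv f 0 1 p) *
      (ip (sff f 0 1 p) (sff f 0 1 p) - ip (sff f 0 0 p) (sff f 1 1 p))"
  unfolding hn_def mean_curv_def sum2
  using sff_sym[OF p, of 1 0] sff_sym[OF p, of "Suc 0" 0] ginv_sym[of 1 0 p] ginv_sym[of "Suc 0" 0 p]
  by (simp add: ip_lin ip_sym[of "sff f 1 1 p" "sff f 0 0 p"] ip_sym[of "sff f (Suc 0) (Suc 0) p" "sff f 0 0 p"]
       ip_sym[of "sff f 1 1 p" "sff f 0 1 p"] ip_sym[of "sff f (Suc 0) (Suc 0) p" "sff f 0 (Suc 0) p"]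
       ip_sym[of "sff f 0 1 p" "sff f 0 0 p"] ip_sym[of "sff f 0 (Suc 0) p" "sff f 0 0 p"] scaleR_add_right
       scaleR_add_left sum.distrib)
     (simp add: algebra_simps two_vec ip_lin ip_sym[of "sff f 0 (Suc 0) p" "sff f 0 0 p"]
        ip_sym[of "sff f (Suc 0) (Suc 0) p" "sff f 0 (Suc 0) p"] ip_sym[of "sff f (Suc 0) (Suc 0) p" "sff f 0 0 p"])

lemma hn_eq: assumes p: "p \<in> U"
  shows "hn p = 4 * ip (mean_curv f p) (mean_curv f p) - 2 * gauss_curv f p"
proof -
  have d: "detg f p \<noteq> 0" by (rule detg_ne[OF p])
  have K: "gauss_curv f p = (ip (sff f 0 0 p) (sff f 1 1 p) - ip (sff f 0 1 p) (sff f 0 1 p)) / detg f p"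
    using gauss_eq[OF p] d by (simp add: field_simps)
  show ?thesis using hn_poly[OF p] unfolding detginv[OF p] K
    by (simp add: d field_simps)
qed

end


lemma gram4:
  fixes v :: "4 \<Rightarrow> real^4" and r :: "real^4"
  assumes indep: "\<And>u::real^4. (\<Sum>i\<in>UNIV. u $ i *\<^sub>R v i) = 0 \<Longrightarrow> u = 0"
    and orth: "\<And>i. ip r (v i) = 0"
  shows "r = 0"
proof -
  define A :: "real^4^4" where "A = (\<chi> i k. v i $ k)"
  have tA: "transpose A *v u = (\<Sum>i\<in>UNIV. u $ i *\<^sub>R v i)" for u
    unfolding A_def by (simp add: vec_eq_iff vector_matrix_mult_def sum_component mult.commute)
  have "\<forall>u. transpose A *v u = 0 \<longrightarrow> u = 0" using indep tA by simp
  then obtain B where "B ** transpose A = mat 1" using matrix_left_invertible_ker by blast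
  then have "transpose A ** B = mat 1" using matrix_left_right_inverse by blast
  then have "transpose (transpose A ** B) = mat 1" by simp
  then have "transpose B ** A = mat 1" by (simp add: matrix_transpose_mul)
  then have inj: "\<forall>x. A *v x = 0 \<longrightarrow> x = 0" using matrix_left_invertible_ker by blast
  define Jr :: "real^4" where "Jr = (\<chi> k. eps4 k * r $ k)"
  have "A *v Jr = 0"
  proof -
    have "(A *v Jr) $ i = ip r (v i)" for i
      unfolding A_def Jr_def ip_def by (simp add: matrix_vector_mult_def algebra_simps)
    then show ?thesis using orth by (simp add: vec_eq_iff)
  qed
  then have "Jr = 0" using inj by blast
  then have "r $ k = 0" for k
    unfolding Jr_def by (auto simp: vec_eq_iff eps4_def split: if_splits)
  then show ?thesis by (simp add: vec_eq_iff)
qed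


lemma lin2x2: fixes a b g00 g01 g11 :: real
  assumes "g00 * g11 - g01 * g01 \<noteq> 0" "a * g00 + b * g01 = 0" "a * g01 + b * g11 = 0"
  shows "a = 0 \<and> b = 0"
proof -
  have "a * (g00 * g11 - g01 * g01) = (a * g00 + b * g01) * g11 - (a * g01 + b * g11) * g01"
    by (simp add: algebra_simps)
  then have "a * (g00 * g11 - g01 * g01) = 0" using assms(2,3) by simp
  moreover have "b * (g00 * g11 - g01 * g01) = (a * g01 + b * g11) * g00 - (a * g00 + b * g01) * g01"
    by (simp add: algebra_simps)
  then have "b * (g00 * g11 - g01 * g01) = 0" using assms(2,3) by simp
  ultimately show ?thesis using assms(1) by simp
qed

lemma normal_span:
  fixes x0 x1 H w v :: "real^4"
  assumes det: "ip x0 x0 * ip x1 x1 - ip x0 x1 * ip x0 x1 \<noteq> 0"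
    and H0: "ip H x0 = 0" and H1: "ip H x1 = 0" and w0: "ip w x0 = 0" and w1: "ip w x1 = 0"
    and HH: "ip H H = 0" and Hw: "ip H w \<noteq> 0"
    and v0: "ip v x0 = 0" and v1: "ip v x1 = 0"
  shows "v = ((ip v w - (ip v H / ip H w) * ip w w) / ip H w) *\<^sub>R H + (ip v H / ip H w) *\<^sub>R w"
proof -
  define \<beta> where "\<beta> = ip v H / ip H w"
  define \<alpha> where "\<alpha> = (ip v w - \<beta> * ip w w) / ip H w"
  define r where "r = v - \<alpha> *\<^sub>R H - \<beta> *\<^sub>R w"
  define fam :: "4 \<Rightarrow> real^4" where "fam i = (if i = 1 then x0 else if i = 2 then x1 else if i = 3 then H else w)" for i
  have fam: "fam 1 = x0" "fam 2 = x1" "fam 3 = H" "fam 4 = w" unfolding fam_def by simp_all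
  have "r = 0"
  proof (rule gram4[of fam])
    fix u :: "real^4"
    assume "(\<Sum>i\<in>UNIV. u $ i *\<^sub>R fam i) = 0"
    then have z: "u $ 1 *\<^sub>R x0 + u $ 2 *\<^sub>R x1 + u $ 3 *\<^sub>R H + u $ 4 *\<^sub>R w = 0"
      by (simp add: sum_4 fam)
    have e0: "u $ 1 * ip x0 x0 + u $ 2 * ip x0 x1 = 0"
      using arg_cong[OF z, of "\<lambda>z. ip z x0"] H0 w0 by (simp add: ip_lin ip_sym[of x1 x0])
    have e1: "u $ 1 * ip x0 x1 + u $ 2 * ip x1 x1 = 0"
      using arg_cong[OF z, of "\<lambda>z. ip z x1"] H1 w1 by (simp add: ip_lin)
    have u12: "u $ 1 = 0 \<and> u $ 2 = 0" by (rule lin2x2[OF det e0 e1])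
    have "u $ 4 * ip H w = 0"
      using arg_cong[OF z, of "\<lambda>z. ip z H"] H0 H1 HH u12 by (simp add: ip_lin ip_sym[of x0 H] ip_sym[of x1 H] ip_sym[of w H])
    then have u4: "u $ 4 = 0" using Hw by simp
    have "u $ 3 * ip H w = 0"
      using arg_cong[OF z, of "\<lambda>z. ip z w"] w0 w1 u12 u4 by (simp add: ip_lin ip_sym[of x0 w] ip_sym[of x1 w])
    then have u3: "u $ 3 = 0" using Hw by simp
    show "u = 0" using u12 u3 u4 by (simp add: vec_eq_iff forall_4)
  next
    fix i :: 4
    have "ip r x0 = 0" "ip r x1 = 0" unfolding r_def using v0 v1 H0 H1 w0 w1 by (simp_all add: ip_lin)
    moreover have "ip r H = 0" unfolding r_def \<beta>_def using HH Hw
      by (simp add: ip_lin ip_sym[of w H])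
    moreover have "ip r w = 0" unfolding r_def \<alpha>_def using Hw
      by (simp add: ip_lin field_simps)
    ultimately show "ip r (fam i) = 0" unfolding fam_def by auto
  qed
  then show ?thesis unfolding r_def \<alpha>_def \<beta>_def by (simp add: algebra_simps)
qed


context surf begin

lemma H_perp: "q \<in> U \<Longrightarrow> m < 2 \<Longrightarrow> ip (mean_curv f q) (pd m f q) = 0"
  unfolding mean_curv_def by (simp add: ip_lin sff_perp)

lemma ip_H_F2: assumes q: "q \<in> U"
  shows "ip (mean_curv f q) (pd j (pd l f) q) = ip (mean_curv f q) (sff f j l q)"
  unfolding F2_dec[OF q, of j l] sum2 using H_perp[OF q, of 0] H_perp[OF q, of 1]
  by (simp add: ip_lin)

lemma dH_tan: assumes q: "q \<in> U" and l: "l < 2"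
  shows "ip (pd j (mean_curv f) q) (pd l f q) = - ip (mean_curv f q) (sff f j l q)"
proof -
  have "pd j (\<lambda>q. ip (mean_curv f q) (pd l f q)) q = 0"
    by (rule pd_zero[OF opn q]) (use H_perp l in auto)
  moreover have "pd j (\<lambda>q. ip (mean_curv f q) (pd l f q)) q =
      ip (pd j (mean_curv f) q) (pd l f q) + ip (mean_curv f q) (pd j (pd l f) q)"
    by (rule pd_bil[OF bb_ip diff_H[OF q] dF1[OF q]])
  ultimately show ?thesis using ip_H_F2[OF q] by simp
qed

definition cH :: "nat \<Rightarrow> nat \<Rightarrow> real \<times> real \<Rightarrow> real" where
  "cH j k q = - (\<Sum>l<2. ginv f k l q * ip (mean_curv f q) (sff f j l q))"

lemma diff_cH: "q \<in> U \<Longrightarrow> cH j k differentiable at q"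
  unfolding cH_def[abs_def]
  by (intro differentiable_minus diff_sum diff_bil[OF bounded_bilinear_mult] diff_ginv diff_bil[OF bb_ip] diff_H diff_sff)

lemma dH_rep: assumes q: "q \<in> U" and n: "nproj f q (pd j (mean_curv f) q) = 0"
  shows "pd j (mean_curv f) q = (\<Sum>k<2. cH j k q *\<^sub>R pd k f q)"
proof -
  have "pd j (mean_curv f) q = nproj f q (pd j (mean_curv f) q) + (\<Sum>k<2. tc q (pd j (mean_curv f) q) k *\<^sub>R pd k f q)"
    unfolding nproj_alt by simp
  also have "\<dots> = (\<Sum>k<2. cH j k q *\<^sub>R pd k f q)"
    unfolding n tc_def cH_def sum2 using dH_tan[OF q, of 0] dH_tan[OF q, of 1] by simp
  finally show ?thesis .
qed

lemma ricci:
  assumes par: "\<And>q i. q \<in> U \<Longrightarrow> i < 2 \<Longrightarrow> nproj f q (pd i (mean_curv f) q) = 0" and p: "p \<in> U"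
  shows "(\<Sum>k<2. cH 0 k p *\<^sub>R sff f 1 k p) = (\<Sum>k<2. cH 1 k p *\<^sub>R sff f 0 k p)"
proof -
  have rep: "\<And>q. q \<in> U \<Longrightarrow> pd j (mean_curv f) q = (\<Sum>k<2. cH j k q *\<^sub>R pd k f q)" if "j < 2" for j
    using dH_rep par that by blast
  have dj: "pd j (mean_curv f) differentiable at p" if "j < 2" for j
    by (rule diff_cong[OF opn p rep[OF that]])
       (auto intro!: diff_sum diff_bil[OF bounded_bilinear_scaleR] diff_cH dF1 p)
  have sw: "pd 1 (pd 0 (mean_curv f)) p = pd 0 (pd 1 (mean_curv f)) p"
    by (rule schwarz[OF opn p diff_H dj dj]) auto
  have dd: "nproj f p (pd i (pd j (mean_curv f)) p) = (\<Sum>k<2. cH j k p *\<^sub>R sff f i k p)" if "j < 2" for i j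
  proof -
    have "pd i (pd j (mean_curv f)) p = pd i (\<lambda>q. \<Sum>k<2. cH j k q *\<^sub>R pd k f q) p"
      by (rule pd_cong[OF opn p rep[OF that]])
    also have "\<dots> = (\<Sum>k<2. pd i (cH j k) p *\<^sub>R pd k f p + cH j k p *\<^sub>R pd i (pd k f) p)"
      by (simp add: pd_sum diff_bil[OF bounded_bilinear_scaleR] diff_cH[OF p] dF1[OF p]
          pd_bil[OF bounded_bilinear_scaleR diff_cH[OF p] dF1[OF p]] del: sum2)
    finally show ?thesis unfolding sum2 using nproj_F[OF p, of 0] nproj_F[OF p, of 1]
      by (simp add: nproj_add nproj_scaleR sff_def)
  qed
  show ?thesis using dd[of 0 1] dd[of 1 0] sw by simp
qed

lemma bip_Nn: assumes p: "p \<in> U"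
  shows "bip (Nn p) (wedge (mean_curv f p) w) =
    (\<Sum>k<2. cH 1 k p * ip (sff f 0 k p) w) - (\<Sum>k<2. cH 0 k p * ip (sff f 1 k p) w)"
  unfolding Nn_def cH_def sum2
  using sff_sym[OF p, of 1 0] sff_sym[OF p, of "Suc 0" 0] ginv_sym[of 1 0 p] ginv_sym[of "Suc 0" 0 p]
  by (simp add: bip_add_left bip_scaleR_left bip_wedge ip_sym[of "sff f _ _ p" "mean_curv f p"] algebra_simps)

lemma wedge_comb: "wedge (a1 *\<^sub>R H + a2 *\<^sub>R w) (b1 *\<^sub>R H + b2 *\<^sub>R w) = (a1 * b2 - a2 * b1) *\<^sub>R wedge H w"
  using wedge_anti[of H w]
  by (simp add: wedge_add_left wedge_add_right wedge_scaleR_left wedge_scaleR_right wedge_self algebra_simps)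

lemma Nn_zero:
  assumes par: "\<And>q i. q \<in> U \<Longrightarrow> i < 2 \<Longrightarrow> nproj f q (pd i (mean_curv f) q) = 0" and p: "p \<in> U"
    and Hne: "mean_curv f p \<noteq> 0" and HH: "ip (mean_curv f p) (mean_curv f p) = 0"
  shows "Nn p = 0"
proof -
  define H where "H = mean_curv f p"
  obtain e where e: "ip H e \<noteq> 0" using ip_nondeg Hne unfolding H_def by blast
  define w where "w = nproj f p e"
  have Hw: "ip H w \<noteq> 0"
  proof -
    have "ip H w = ip H e" unfolding w_def nproj_alt sum2 H_def using H_perp[OF p, of 0] H_perp[OF p, of 1]
      by (simp add: ip_lin)
    then show ?thesis using e by simp
  qed
  have w0: "ip w (pd 0 f p) = 0" and w1: "ip w (pd 1 f p) = 0" unfolding w_def using nproj_perp[OF p] by auto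
  have H0: "ip H (pd 0 f p) = 0" and H1: "ip H (pd 1 f p) = 0" unfolding H_def using H_perp[OF p] by auto
  have det: "ip (pd 0 f p) (pd 0 f p) * ip (pd 1 f p) (pd 1 f p) - ip (pd 0 f p) (pd 1 f p) * ip (pd 0 f p) (pd 1 f p) \<noteq> 0"
    using detg_ne[OF p] unfolding detg_def gm_def by (simp add: ip_sym[of "pd (Suc 0) f p" "pd 0 f p"])
  have HH': "ip H H = 0" using HH unfolding H_def .
  have dec: "\<exists>a b. sff f i j p = a *\<^sub>R H + b *\<^sub>R w" for i j
    using normal_span[OF det H0 H1 w0 w1 HH' Hw, of "sff f i j p"] sff_perp[OF p, of 0 i j] sff_perp[OF p, of 1 i j]
    by auto
  obtain a00 b00 where d00: "sff f 0 0 p = a00 *\<^sub>R H + b00 *\<^sub>R w" using dec by blast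
  obtain a01 b01 where d01: "sff f 0 1 p = a01 *\<^sub>R H + b01 *\<^sub>R w" using dec by blast
  obtain a11 b11 where d11: "sff f 1 1 p = a11 *\<^sub>R H + b11 *\<^sub>R w" using dec by blast
  define lam where "lam = ginv f 0 0 p * (a00 * b01 - b00 * a01) + ginv f 0 1 p * (a00 * b11 - b00 * a11)
      + ginv f 1 1 p * (a01 * b11 - b01 * a11)"
  have N: "Nn p = lam *\<^sub>R wedge H w"
    unfolding Nn_def d00 d01 d11 wedge_comb lam_def by (simp add: algebra_simps)
  have "bip (Nn p) (wedge H w) = 0"
  proof -
    have r: "(\<Sum>k<2. cH 0 k p *\<^sub>R sff f 1 k p) = (\<Sum>k<2. cH 1 k p *\<^sub>R sff f 0 k p)"
      by (rule ricci[OF par p])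
    have "ip (\<Sum>k<2. cH 0 k p *\<^sub>R sff f 1 k p) w = ip (\<Sum>k<2. cH 1 k p *\<^sub>R sff f 0 k p) w"
      using r by simp
    then have "(\<Sum>k<2. cH 1 k p * ip (sff f 0 k p) w) - (\<Sum>k<2. cH 0 k p * ip (sff f 1 k p) w) = 0"
      by (simp add: ip_lin)
    then show ?thesis unfolding H_def bip_Nn[OF p] .
  qed
  then have "lam * (ip H H * ip w w - ip H w * ip w H) = 0"
    unfolding N bip_scaleR_left bip_wedge .
  then have "lam * (ip H w * ip H w) = 0" using HH' by (simp add: ip_sym[of w H])
  then have "lam = 0" using Hw by simp
  then show ?thesis using N by simp
qed

end


context surf begin

lemma sfun_pos: "q \<in> U \<Longrightarrow> sfun q > 0"
  unfolding sfun_def using dneg by simp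

lemma ip_nproj_normal: assumes "ip v (pd 0 f p) = 0" "ip v (pd 1 f p) = 0"
  shows "ip v (nproj f p e) = ip v e"
  unfolding nproj_alt sum2 using assms by (simp add: ip_lin)

lemma DH_perp: "p \<in> U \<Longrightarrow> m < 2 \<Longrightarrow> ip (DH a p) (pd m f p) = 0"
  unfolding DH_def by (rule nproj_perp)

lemma bip_Nn_perp: assumes p: "p \<in> U" and c: "c < 2"
  shows "bip (Nn p) (wedge (pd c f p) z) = 0"
  unfolding Nn_def using sff_perp[OF p c]
  by (simp add: bip_add_left bip_scaleR_left bip_wedge)

lemma dir1: assumes p: "p \<in> U" and HH: "ip (mean_curv f p) (mean_curv f p) = 0"
    and lap0: "lap f (gauss_map f) p = 0"
  shows "gauss_curv f p = 0 \<and> DH 0 p = 0 \<and> DH 1 p = 0"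
proof -
  define s where "s = sfun p"
  have s: "s > 0" unfolding s_def by (rule sfun_pos[OF p])
  define x0 where "x0 = pd 0 f p"
  define x1 where "x1 = pd 1 f p"
  have X: "(hn p * s) *\<^sub>R wedge x0 x1 - (2 * s) *\<^sub>R (wedge (DH 0 p) x1 - wedge (DH 1 p) x0) - (2 * s) *\<^sub>R Nn p = 0"
    using lap_main[OF p] lap0 unfolding s_def x0_def x1_def Wf_def by simp
  have D0: "ip (DH a p) x0 = 0" "ip (DH a p) x1 = 0" for a
    unfolding x0_def x1_def using DH_perp[OF p] by auto
  have det: "ip x0 x0 * ip x1 x1 - ip x0 x1 * ip x0 x1 \<noteq> 0"
    using detg_ne[OF p] unfolding detg_def gm_def x0_def x1_def by (simp add: ip_sym[of "pd (Suc 0) f p" "pd 0 f p"])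
  have NW: "bip (Nn p) (wedge x0 x1) = 0" unfolding x0_def by (rule bip_Nn_perp[OF p]) simp
  have "bip (0::real^4^4) (wedge x0 x1) = 0" by (simp add: bip_zero_left)
  then have "hn p * s * (ip x0 x0 * ip x1 x1 - ip x0 x1 * ip x0 x1) = 0"
    unfolding X[symmetric] using D0 NW
    by (simp add: bip_diff_left bip_scaleR_left bip_wedge ip_sym[of x1 x0])
  then have "hn p = 0" using s det by simp
  then have K: "gauss_curv f p = 0" using hn_eq[OF p] HH by simp
  have DHz: "DH a p = 0" if a: "a < 2" for a
  proof -
    have "ip (DH a p) e = 0" for e
    proof -
      define \<xi> where "\<xi> = nproj f p e"
      have \<xi>: "ip \<xi> x0 = 0" "ip \<xi> x1 = 0" unfolding \<xi>_def x0_def x1_def using nproj_perp[OF p] by auto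
      have gen: "bip ((hn p * s) *\<^sub>R wedge x0 x1 - (2 * s) *\<^sub>R (wedge (DH 0 p) x1 - wedge (DH 1 p) x0) - (2 * s) *\<^sub>R Nn p) (wedge xc \<xi>)
          = (2 * s) * (ip (DH 0 p) \<xi> * ip x1 xc - ip (DH 1 p) \<xi> * ip x0 xc)"
        if "ip (DH 0 p) xc = 0" "ip (DH 1 p) xc = 0" "bip (Nn p) (wedge xc \<xi>) = 0" for xc
        using that \<xi> by (simp add: bip_diff_left bip_scaleR_left bip_wedge ip_sym[of x1 \<xi>] ip_sym[of x0 \<xi>])
          (simp add: algebra_simps)
      have eq: "ip (DH 0 p) \<xi> * ip x1 xc - ip (DH 1 p) \<xi> * ip x0 xc = 0" if xc: "xc = x0 \<or> xc = x1" for xc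
      proof -
        have NW': "bip (Nn p) (wedge xc \<xi>) = 0"
          using xc bip_Nn_perp[OF p, of 0] bip_Nn_perp[OF p, of 1] unfolding x0_def x1_def by auto
        have "ip (DH 0 p) xc = 0" "ip (DH 1 p) xc = 0" using xc D0 by auto
        from gen[OF this NW'] X have "(2 * s) * (ip (DH 0 p) \<xi> * ip x1 xc - ip (DH 1 p) \<xi> * ip x0 xc) = 0"
          by (simp add: bip_zero_left)
        then show ?thesis using s by simp
      qed
      have e0: "ip (DH 1 p) \<xi> * ip x0 x0 + (- ip (DH 0 p) \<xi>) * ip x0 x1 = 0"
        using eq[of x0] by (simp add: ip_sym[of x1 x0] algebra_simps)
      have e1: "ip (DH 1 p) \<xi> * ip x0 x1 + (- ip (DH 0 p) \<xi>) * ip x1 x1 = 0"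
        using eq[of x1] by (simp add: algebra_simps)
      have z: "ip (DH 1 p) \<xi> = 0 \<and> - ip (DH 0 p) \<xi> = 0" by (rule lin2x2[OF det e0 e1])
      have "ip (DH a p) e = ip (DH a p) \<xi>"
        unfolding \<xi>_def by (rule ip_nproj_normal[symmetric]) (use D0 in \<open>auto simp: x0_def x1_def\<close>)
      moreover have "a = 0 \<or> a = Suc 0" using a by auto
      ultimately show ?thesis using z by auto
    qed
    then show ?thesis by (rule ip_nondeg)
  qed
  show ?thesis using K DHz[of 0] DHz[of 1] by simp
qed

lemma dir2: assumes p: "p \<in> U" and HH: "ip (mean_curv f p) (mean_curv f p) = 0"
    and Hne: "mean_curv f p \<noteq> 0"
    and K: "gauss_curv f p = 0"
    and par: "\<And>q i. q \<in> U \<Longrightarrow> i < 2 \<Longrightarrow> nproj f q (pd i (mean_curv f) q) = 0"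
  shows "lap f (gauss_map f) p = 0"
proof -
  have "hn p = 0" using hn_eq[OF p] HH K by simp
  moreover have "DH 0 p = 0" "DH 1 p = 0" unfolding DH_def using par[OF p] by auto
  moreover have "Nn p = 0" by (rule Nn_zero[OF par p Hne HH])
  ultimately show ?thesis unfolding lap_main[OF p] by (simp add: wedge_zero_left)
qed

end

theorem proposition3p4:
  fixes U :: "(real \<times> real) set" and f :: "real \<times> real \<Rightarrow> real^4"
  assumes "lorentz_surface U f"
    and "quasi_minimal U f"
  shows "harmonic_gauss_map U f \<longleftrightarrow> flat U f \<and> parallel_H U f"
proof -
  interpret surf U f using assms(1) unfolding lorentz_surface_def by unfold_locales auto
  have qm: "mean_curv f p \<noteq> 0" "ip (mean_curv f p) (mean_curv f p) = 0" if "p \<in> U" for p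
    using assms(2) that unfolding quasi_minimal_def by auto
  show ?thesis
  proof
    assume h: "harmonic_gauss_map U f"
    have r: "gauss_curv f p = 0 \<and> DH 0 p = 0 \<and> DH 1 p = 0" if p: "p \<in> U" for p
      using dir1[OF p qm(2)[OF p]] h p unfolding harmonic_gauss_map_def by auto
    show "flat U f \<and> parallel_H U f"
      unfolding flat_def parallel_H_def
    proof (intro conjI ballI allI impI)
      fix p assume "p \<in> U" then show "gauss_curv f p = 0" using r by blast
    next
      fix p i assume p: "p \<in> U" and i: "i < (2::nat)"
      then have "i = 0 \<or> i = 1" by auto
      then show "nproj f p (pd i (mean_curv f) p) = 0" using r[OF p] unfolding DH_def by auto
    qed
  next
    assume fp: "flat U f \<and> parallel_H U f"
    have par: "\<And>q i. q \<in> U \<Longrightarrow> i < 2 \<Longrightarrow> nproj f q (pd i (mean_curv f) q) = 0"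
      using fp unfolding parallel_H_def by blast
    show "harmonic_gauss_map U f"
      unfolding harmonic_gauss_map_def
    proof
      fix p assume p: "p \<in> U"
      show "lap f (gauss_map f) p = 0"
        by (rule dir2[OF p qm(2)[OF p] qm(1)[OF p] _ par]) (use fp p in \<open>auto simp: flat_def\<close>)
    qed
  qed
qed


end
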